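(* Let $f=f(x_1,\ldots,x_n)$ be a positive canalyzing Boolean function with $k\ge 0$ relevant variables. Then $f$ has at least $k+1$ extremal points, and it has exactly $k+1$ extremal points if and only if $f$ is linear read-once.
   Context: $B=\{0,1\}$; $\preceq$ is the coordinatewise order on $B^n$. $f$ is positive if $f(\mathbf{x})=1$ and $\mathbf{x}\preceq\mathbf{y}$ imply $f(\mathbf{y})=1$. Extremal points are the $\preceq$-maximal false points (maximal zeros) and $\preceq$-minimal true points (minimal ones). $f_{|x_i=\alpha}$ denotes the function of the remaining $n-1$ variables obtained by fixing $x_i=\alpha$. A variable $x_i$ is relevant if $f_{|x_i=0}\not\equiv f_{|x_i=1}$. $f$ is canalyzing if for some $i$, $f_{|x_i=0}$ or $f_{|x_i=1}$ is a constant function. A function is linear read-once (lro) if it is constant or can be represented by a nested formula: the literals $x,\overline{x}$ are nested formulas, and $x\vee t$, $x\wedge t$, $\overline{x}\vee t$, $\overline{x}\wedge t$ are nested formulas whenever $t$ is a nested formula containing neither $x$ nor $\overline{x}$. *)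

theory Defs
  imports Main
begin

text \<open>Boolean functions of n variables: f :: bool list \<Rightarrow> bool, considered on
  the points of B^n, i.e. lists of length n (False = 0, True = 1).
  Variables are indexed 0,...,n-1.\<close>

definition points :: "nat \<Rightarrow> bool list set" where
  "points n = {x. length x = n}"

definition leqB :: "bool list \<Rightarrow> bool list \<Rightarrow> bool" where
  "leqB x y \<longleftrightarrow> length x = length y \<and> (\<forall>i<length x. x ! i \<longrightarrow> y ! i)"

definition positive :: "nat \<Rightarrow> (bool list \<Rightarrow> bool) \<Rightarrow> bool" where
  "positive n f \<longleftrightarrow> (\<forall>x\<in>points n. \<forall>y\<in>points n. f x \<and> leqB x y \<longrightarrow> f y)"

definition max_zeros :: "nat \<Rightarrow> (bool list \<Rightarrow> bool) \<Rightarrow> bool list set" where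
  "max_zeros n f = {x\<in>points n. \<not> f x \<and>
      (\<forall>y\<in>points n. \<not> f y \<and> leqB x y \<longrightarrow> y = x)}"

definition min_ones :: "nat \<Rightarrow> (bool list \<Rightarrow> bool) \<Rightarrow> bool list set" where
  "min_ones n f = {x\<in>points n. f x \<and>
      (\<forall>y\<in>points n. f y \<and> leqB y x \<longrightarrow> y = x)}"

definition extremal_points :: "nat \<Rightarrow> (bool list \<Rightarrow> bool) \<Rightarrow> bool list set" where
  "extremal_points n f = max_zeros n f \<union> min_ones n f"

definition restrict :: "(bool list \<Rightarrow> bool) \<Rightarrow> nat \<Rightarrow> bool \<Rightarrow> bool list \<Rightarrow> bool" where
  "restrict f i a = (\<lambda>ys. f (take i ys @ a # drop i ys))"

definition relevant :: "nat \<Rightarrow> (bool list \<Rightarrow> bool) \<Rightarrow> nat \<Rightarrow> bool" where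
  "relevant n f i \<longleftrightarrow> i < n \<and>
     (\<exists>ys\<in>points (n - 1). restrict f i False ys \<noteq> restrict f i True ys)"

definition canalyzing :: "nat \<Rightarrow> (bool list \<Rightarrow> bool) \<Rightarrow> bool" where
  "canalyzing n f \<longleftrightarrow> (\<exists>i<n. \<exists>a c. \<forall>ys\<in>points (n - 1). restrict f i a ys = c)"

datatype nested = Lit nat bool | NOr nat bool nested | NAnd nat bool nested

fun nvars :: "nested \<Rightarrow> nat set" where
  "nvars (Lit i b) = {i}"
| "nvars (NOr i b t) = insert i (nvars t)"
| "nvars (NAnd i b t) = insert i (nvars t)"

fun wf_nested :: "nat \<Rightarrow> nested \<Rightarrow> bool" where
  "wf_nested n (Lit i b) \<longleftrightarrow> i < n"
| "wf_nested n (NOr i b t) \<longleftrightarrow> i < n \<and> i \<notin> nvars t \<and> wf_nested n t"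
| "wf_nested n (NAnd i b t) \<longleftrightarrow> i < n \<and> i \<notin> nvars t \<and> wf_nested n t"

fun eval_lit :: "nat \<Rightarrow> bool \<Rightarrow> bool list \<Rightarrow> bool" where
  "eval_lit i b x = (if b then x ! i else \<not> x ! i)"

fun eval_nested :: "nested \<Rightarrow> bool list \<Rightarrow> bool" where
  "eval_nested (Lit i b) x = eval_lit i b x"
| "eval_nested (NOr i b t) x = (eval_lit i b x \<or> eval_nested t x)"
| "eval_nested (NAnd i b t) x = (eval_lit i b x \<and> eval_nested t x)"

definition lro :: "nat \<Rightarrow> (bool list \<Rightarrow> bool) \<Rightarrow> bool" where
  "lro n f \<longleftrightarrow> (\<exists>c. \<forall>x\<in>points n. f x = c) \<or>
     (\<exists>t. wf_nested n t \<and> (\<forall>x\<in>points n. f x = eval_nested t x))"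

end

theory Submission
  imports Defs
begin

lemma finite_points: "finite (points n)"
  unfolding points_def using finite_lists_length_eq[of "UNIV::bool set" n] by simp

lemma in_points: "x \<in> points n \<longleftrightarrow> length x = n" by (simp add: points_def)

lemma points_upd[simp]: "x \<in> points n \<Longrightarrow> x[i:=a] \<in> points n"
  by (simp add: points_def)

lemma leqB_refl[simp]: "leqB x x" by (simp add: leqB_def)

lemma leqB_trans: "leqB x y \<Longrightarrow> leqB y z \<Longrightarrow> leqB x z"
  by (simp add: leqB_def)

lemma leqB_antisym: "leqB x y \<Longrightarrow> leqB y x \<Longrightarrow> x = y"
  unfolding leqB_def by (auto intro: nth_equalityI)

lemma nth_upd[simp]: "j < length x \<Longrightarrow> x[i:=a]!j = (if i = j then a else x!j)"
  by (cases "i = j") auto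

lemma leqB_upd_T[simp]: "leqB x (x[i:=True])"
  by (auto simp add: leqB_def)

lemma leqB_upd_F[simp]: "leqB (x[i:=False]) x"
  by (auto simp add: leqB_def)

lemma leqB_upd_mono: "leqB x y \<Longrightarrow> leqB (x[i:=a]) (y[i:=a])"
  by (auto simp add: leqB_def)

lemma leqB_Cons: "leqB (a#x) (b#y) \<longleftrightarrow> (a \<longrightarrow> b) \<and> leqB x y"
  unfolding leqB_def by (auto simp: All_less_Suc2)

lemma leqB_Nil1: "leqB [] y \<longleftrightarrow> y = []"
  unfolding leqB_def by auto

lemma leqB_Cons1: "leqB (a#x) y \<longleftrightarrow> (\<exists>b y'. y = b # y' \<and> (a \<longrightarrow> b) \<and> leqB x y')"
proof (cases y)
  case Nil then show ?thesis by (simp add: leqB_def)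
next
  case (Cons b y') then show ?thesis by (simp add: leqB_Cons)
qed

lemma leqB_len: "leqB x y \<Longrightarrow> length y = length x"
  by (simp add: leqB_def)

lemma leqB_points: "leqB x y \<Longrightarrow> x \<in> points n \<Longrightarrow> y \<in> points n"
  by (simp add: leqB_def points_def)

lemma leqB_points': "leqB x y \<Longrightarrow> y \<in> points n \<Longrightarrow> x \<in> points n"
  by (simp add: leqB_def points_def)

lemma leqB_nth: "leqB x y \<Longrightarrow> i < length x \<Longrightarrow> x ! i \<Longrightarrow> y ! i"
  by (simp add: leqB_def)

lemma pos_mono: "positive n f \<Longrightarrow> x \<in> points n \<Longrightarrow> leqB x y \<Longrightarrow> f x \<Longrightarrow> f y"
  unfolding positive_def using leqB_points by blast

lemma pos_upd: "positive n f \<Longrightarrow> x \<in> points n \<Longrightarrow> f (x[i:=False]) \<Longrightarrow> f (x[i:=True])"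
  by (meson leqB_trans leqB_upd_F leqB_upd_T points_upd pos_mono)

lemma pos_upd2: "positive n f \<Longrightarrow> x \<in> points n \<Longrightarrow> f (x[i:=False]) \<Longrightarrow> f x"
  by (meson leqB_upd_F points_upd pos_mono)

lemma pos_upd3: "positive n f \<Longrightarrow> x \<in> points n \<Longrightarrow> f x \<Longrightarrow> f (x[i:=True])"
  by (meson leqB_upd_T pos_mono)

definition cnt :: "bool list \<Rightarrow> nat" where "cnt x = length (filter id x)"

lemma leqB_cnt_le: "leqB x y \<Longrightarrow> cnt x \<le> cnt y"
proof (induction x arbitrary: y)
  case Nil then show ?case by (simp add: leqB_Nil1 cnt_def)
next
  case (Cons a x)
  then obtain b y' where y: "y = b # y'" and ab: "a \<longrightarrow> b" and xy: "leqB x y'" by (auto simp: leqB_Cons1)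
  have "cnt x \<le> cnt y'" using Cons.IH[OF xy] .
  with ab show ?case by (cases a; cases b) (auto simp: cnt_def y)
qed

lemma leqB_cnt: "leqB x y \<Longrightarrow> x \<noteq> y \<Longrightarrow> cnt x < cnt y"
proof (induction x arbitrary: y)
  case Nil then show ?case by (simp add: leqB_Nil1)
next
  case (Cons a x)
  then obtain b y' where y: "y = b # y'" and ab: "a \<longrightarrow> b" and xy: "leqB x y'" by (auto simp: leqB_Cons1)
  show ?case
  proof (cases "x = y'")
    case True
    then have "a \<noteq> b" using Cons.prems y by auto
    with ab show ?thesis by (simp add: cnt_def y True)
  next
    case False
    with Cons.IH xy have "cnt x < cnt y'" by blast
    with ab show ?thesis by (auto simp: cnt_def y)
  qed
qed

lemma exists_max_zero:
  assumes "x \<in> points n" "\<not> f x"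
  shows "\<exists>z\<in>max_zeros n f. leqB x z"
proof -
  let ?S = "{y\<in>points n. \<not> f y \<and> leqB x y}"
  have fin: "finite ?S" using finite_points by simp
  have ne: "x \<in> ?S" using assms by simp
  obtain m where m: "m \<in> ?S" "\<forall>y\<in>?S. cnt y \<le> cnt m"
  proof -
    have "Max (cnt ` ?S) \<in> cnt ` ?S" using fin ne by (intro Max_in) auto
    then obtain m where "m \<in> ?S" "cnt m = Max (cnt ` ?S)" by auto
    moreover have "\<forall>y\<in>?S. cnt y \<le> Max (cnt ` ?S)" using fin by auto
    ultimately show ?thesis using that by auto
  qed
  have "m \<in> max_zeros n f"
    unfolding max_zeros_def
  proof (intro CollectI conjI ballI impI)
    show "m \<in> points n" "\<not> f m" using m by auto
    fix y assume y: "y \<in> points n" "\<not> f y \<and> leqB m y"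
    then have "y \<in> ?S" using m leqB_trans by auto
    then have "cnt y \<le> cnt m" using m by auto
    then show "y = m" using leqB_cnt y by fastforce
  qed
  then show ?thesis using m by auto
qed

lemma exists_min_one:
  assumes "x \<in> points n" "f x"
  shows "\<exists>t\<in>min_ones n f. leqB t x"
proof -
  let ?S = "{y\<in>points n. f y \<and> leqB y x}"
  have fin: "finite ?S" using finite_points by simp
  have ne: "x \<in> ?S" using assms by simp
  obtain m where m: "m \<in> ?S" "\<forall>y\<in>?S. cnt m \<le> cnt y"
  proof -
    have "Min (cnt ` ?S) \<in> cnt ` ?S" using fin ne by (intro Min_in) auto
    then obtain m where "m \<in> ?S" "cnt m = Min (cnt ` ?S)" by auto
    moreover have "\<forall>y\<in>?S. Min (cnt ` ?S) \<le> cnt y" using fin by auto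
    ultimately show ?thesis using that by auto
  qed
  have "m \<in> min_ones n f"
    unfolding min_ones_def
  proof (intro CollectI conjI ballI impI)
    show "m \<in> points n" "f m" using m by auto
    fix y assume y: "y \<in> points n" "f y \<and> leqB y m"
    then have "y \<in> ?S" using m leqB_trans by auto
    then have "cnt m \<le> cnt y" using m by auto
    then show "y = m" using leqB_cnt y by fastforce
  qed
  then show ?thesis using m by auto
qed

definition rel' :: "nat \<Rightarrow> (bool list \<Rightarrow> bool) \<Rightarrow> nat set" where
  "rel' n f = {i. i < n \<and> (\<exists>x\<in>points n. f (x[i:=False]) \<noteq> f (x[i:=True]))}"

definition fr :: "(bool list \<Rightarrow> bool) \<Rightarrow> nat \<Rightarrow> bool \<Rightarrow> bool list \<Rightarrow> bool" where
  "fr f j a = (\<lambda>x. f (x[j:=a]))"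

definition canal :: "nat \<Rightarrow> (bool list \<Rightarrow> bool) \<Rightarrow> bool" where
  "canal n f \<longleftrightarrow> (\<exists>j<n. (\<forall>x\<in>points n. f (x[j:=True])) \<or> (\<forall>x\<in>points n. \<not> f (x[j:=False])))"

definition dual :: "(bool list \<Rightarrow> bool) \<Rightarrow> bool list \<Rightarrow> bool" where
  "dual f = (\<lambda>x. \<not> f (map Not x))"

lemma relevant_iff: "relevant n f i \<longleftrightarrow> i \<in> rel' n f"
proof
  assume "relevant n f i"
  then obtain ys where i: "i < n" and ys: "ys \<in> points (n-1)"
    and ne: "f (take i ys @ False # drop i ys) \<noteq> f (take i ys @ True # drop i ys)"
    unfolding relevant_def restrict_def by auto
  let ?x = "take i ys @ False # drop i ys"
  have lt: "length (take i ys) = i" using i ys by (simp add: points_def)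
  have "?x \<in> points n" using i ys by (simp add: points_def)
  moreover have "?x[i:=False] = ?x" "?x[i:=True] = take i ys @ True # drop i ys"
    using list_update_length[of "take i ys" False "drop i ys"] lt by auto
  ultimately show "i \<in> rel' n f" using ne i unfolding rel'_def by force
next
  assume "i \<in> rel' n f"
  then obtain x where i: "i < n" and x: "x \<in> points n" and ne: "f (x[i:=False]) \<noteq> f (x[i:=True])"
    unfolding rel'_def by auto
  let ?ys = "take i x @ drop (Suc i) x"
  have lx: "length x = n" using x by (simp add: points_def)
  have ys: "?ys \<in> points (n-1)" using i lx by (simp add: points_def)
  have tk: "take i ?ys = take i x" "drop i ?ys = drop (Suc i) x" using i lx by auto
  have "x[i:=a] = take i ?ys @ a # drop i ?ys" for a
    using upd_conv_take_nth_drop[of i x a] i lx tk by simp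
  then show "relevant n f i" unfolding relevant_def restrict_def using ys ne i by metis
qed

lemma rel_finite: "finite (rel' n f)"
  unfolding rel'_def by simp

lemma rel_sub: "rel' n f \<subseteq> {..<n}"
  unfolding rel'_def by auto

lemma irr_upd:
  assumes "i \<notin> rel' n f" "w \<in> points n"
  shows "f (w[i:=a]) = f w"
proof (cases "i < n")
  case True
  then have e: "f (w[i:=False]) = f (w[i:=True])" using assms unfolding rel'_def by auto
  have "f (w[i:=b]) = f (w[i:=c])" for b c using e by (cases b; cases c) auto
  then have "f (w[i:=a]) = f (w[i:=w!i])" .
  then show ?thesis by simp
next
  case False
  then show ?thesis using assms by (simp add: points_def list_update_beyond)
qed

lemma agree_aux:
  "\<forall>x. x \<in> points n \<longrightarrow> card {i. i < n \<and> x!i \<noteq> y!i} = m \<longrightarrow> (\<forall>i\<in>rel' n f. x!i = y!i) \<longrightarrow> y \<in> points n \<longrightarrow> f x = f y"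
proof (induction m)
  case 0
  show ?case
  proof (intro allI impI)
    fix x assume x: "x \<in> points n" "card {i. i < n \<and> x!i \<noteq> y!i} = 0" and y: "y \<in> points n"
    have "{i. i < n \<and> x!i \<noteq> y!i} = {}" using x by simp
    then have "x = y" using x y by (auto simp: points_def intro: nth_equalityI)
    then show "f x = f y" by simp
  qed
next
  case (Suc m)
  show ?case
  proof (intro allI impI)
    fix x assume x: "x \<in> points n" "card {i. i < n \<and> x!i \<noteq> y!i} = Suc m"
      and ag: "\<forall>i\<in>rel' n f. x!i = y!i" and y: "y \<in> points n"
    let ?D = "{i. i < n \<and> x!i \<noteq> y!i}"
    have "?D \<noteq> {}" using x(2) by (metis card.empty nat.simps(3))
    then obtain i where iD: "i \<in> ?D" by blast
    let ?x' = "x[i := y!i]"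
    have D': "{j. j < n \<and> ?x'!j \<noteq> y!j} = ?D - {i}" using x y iD by (auto simp: points_def split: if_splits)
    have "card (?D - {i}) = m" using x iD by simp
    then have c: "card {j. j < n \<and> ?x'!j \<noteq> y!j} = m" using D' by simp
    have a: "\<forall>j\<in>rel' n f. ?x'!j = y!j"
    proof
      fix j assume j: "j \<in> rel' n f"
      then have jn: "j < n" using rel_sub by auto
      have lx: "length x = n" using x by (simp add: points_def)
      show "?x'!j = y!j"
      proof (cases "i = j")
        case True then show ?thesis using jn lx by simp
      next
        case False then show ?thesis using jn lx ag j by simp
      qed
    qed
    have p: "?x' \<in> points n" using x by simp
    have "f ?x' = f y" using Suc.IH p c a y by blast
    moreover have "i \<notin> rel' n f" using ag iD by auto
    then have "f ?x' = f x" using irr_upd x by blast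
    ultimately show "f x = f y" by simp
  qed
qed

lemma agree: "x \<in> points n \<Longrightarrow> y \<in> points n \<Longrightarrow> (\<forall>i\<in>rel' n f. x!i = y!i) \<Longrightarrow> f x = f y"
  using agree_aux by blast

lemma const_of_norel: "rel' n f = {} \<Longrightarrow> x \<in> points n \<Longrightarrow> y \<in> points n \<Longrightarrow> f x = f y"
  using agree by blast

lemma norel_of_const: "(\<forall>x\<in>points n. f x = c) \<Longrightarrow> rel' n f = {}"
  unfolding rel'_def by auto

lemma ext_card: "card (extremal_points n f) = card (min_ones n f) + card (max_zeros n f)"
proof -
  have fin: "finite (min_ones n f)" "finite (max_zeros n f)"
    using finite_points unfolding min_ones_def max_zeros_def by auto
  have d: "min_ones n f \<inter> max_zeros n f = {}" unfolding min_ones_def max_zeros_def by blast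
  have "card (max_zeros n f \<union> min_ones n f) = card (min_ones n f \<union> max_zeros n f)"
    by (simp add: Un_commute)
  then show ?thesis unfolding extremal_points_def using card_Un_disjoint[OF fin d] by simp
qed

lemma ext_const:
  assumes "rel' n f = {}"
  shows "card (extremal_points n f) = 1"
proof -
  let ?z = "replicate n False" and ?o = "replicate n True"
  have z: "?z \<in> points n" and o: "?o \<in> points n" by (auto simp: points_def)
  have c: "f x = f ?z" if "x \<in> points n" for x using const_of_norel[OF assms that z] .
  have lz: "leqB ?z x" if "x \<in> points n" for x using that by (auto simp: leqB_def points_def)
  have lo: "leqB x ?o" if "x \<in> points n" for x using that by (auto simp: leqB_def points_def)
  show ?thesis
  proof (cases "f ?z")
    case True
    have all: "f x" if "x \<in> points n" for x using c[OF that] True by simp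
    have "min_ones n f = {?z}"
    proof -
      have "x = ?z" if "x \<in> min_ones n f" for x
      proof -
        have x: "x \<in> points n" "\<forall>y\<in>points n. f y \<and> leqB y x \<longrightarrow> y = x"
          using that unfolding min_ones_def by auto
        then show ?thesis using lz[OF x(1)] True z by auto
      qed
      moreover have "?z \<in> min_ones n f" unfolding min_ones_def
      proof (intro CollectI conjI ballI impI)
        fix y assume "y \<in> points n" "f y \<and> leqB y ?z"
        then show "y = ?z" using lz leqB_antisym by blast
      qed (use z True in auto)
      ultimately show ?thesis by blast
    qed
    moreover have "max_zeros n f = {}" using all unfolding max_zeros_def by blast
    ultimately show ?thesis by (simp add: ext_card)
  next
    case False
    have all: "\<not> f x" if "x \<in> points n" for x using c[OF that] False by simp
    have "max_zeros n f = {?o}"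
    proof -
      have "x = ?o" if "x \<in> max_zeros n f" for x
      proof -
        have x: "x \<in> points n" "\<forall>y\<in>points n. \<not> f y \<and> leqB x y \<longrightarrow> y = x"
          using that unfolding max_zeros_def by auto
        then show ?thesis using lo[OF x(1)] all[OF o] o by auto
      qed
      moreover have "?o \<in> max_zeros n f" unfolding max_zeros_def
      proof (intro CollectI conjI ballI impI)
        fix y assume "y \<in> points n" "\<not> f y \<and> leqB ?o y"
        then show "y = ?o" using lo leqB_antisym by blast
      qed (use o all in auto)
      ultimately show ?thesis by blast
    qed
    moreover have "min_ones n f = {}" using all unfolding min_ones_def by blast
    ultimately show ?thesis by (simp add: ext_card)
  qed
qed

lemma cong_rel: "\<forall>x\<in>points n. f x = g x \<Longrightarrow> rel' n f = rel' n g"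
  unfolding rel'_def by (auto)

lemma cong_pos: "\<forall>x\<in>points n. f x = g x \<Longrightarrow> positive n f = positive n g"
  unfolding positive_def by auto

lemma cong_ext: "\<forall>x\<in>points n. f x = g x \<Longrightarrow> extremal_points n f = extremal_points n g"
  unfolding extremal_points_def max_zeros_def min_ones_def by auto

lemma fr_pos: "positive n f \<Longrightarrow> positive n (fr f j a)"
  unfolding positive_def fr_def using leqB_upd_mono points_upd by blast

lemma rel_fr_iff: "i \<in> rel' n (fr f j a) \<longleftrightarrow> i < n \<and> i \<noteq> j \<and> (\<exists>x\<in>points n. f (x[i:=False, j:=a]) \<noteq> f (x[i:=True, j:=a]))"
  unfolding rel'_def fr_def by (auto simp: list_update_overwrite)

lemma rel_fr_sub: "rel' n (fr f j a) \<subseteq> rel' n f - {j}"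
proof
  fix i assume "i \<in> rel' n (fr f j a)"
  then obtain x where i: "i < n" "i \<noteq> j" and x: "x \<in> points n" and ne: "f (x[i:=False, j:=a]) \<noteq> f (x[i:=True, j:=a])"
    unfolding rel_fr_iff by auto
  have "x[j:=a] \<in> points n" using x by simp
  moreover have "x[i:=b, j:=a] = x[j:=a, i:=b]" for b using i by (simp add: list_update_swap)
  ultimately show "i \<in> rel' n f - {j}" using i ne unfolding rel'_def by auto
qed

lemma fr_lost: "i < n \<Longrightarrow> i \<noteq> j \<Longrightarrow> i \<notin> rel' n (fr f j a) \<Longrightarrow> x \<in> points n \<Longrightarrow> f (x[i:=False, j:=a]) = f (x[i:=True, j:=a])"
  unfolding rel_fr_iff by auto

lemma map_not_points[simp]: "map Not x \<in> points n \<longleftrightarrow> x \<in> points n"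
  by (simp add: points_def)

lemma map_not_not[simp]: "map Not (map Not x) = x"
  by (induction x) auto

lemma leqB_not: "leqB (map Not x) (map Not y) \<longleftrightarrow> leqB y x"
  unfolding leqB_def by auto

lemma dual_dual[simp]: "dual (dual f) = f"
  unfolding dual_def by (simp add: comp_def)


lemma dual_pos: "positive n f \<Longrightarrow> positive n (dual f)"
  unfolding positive_def dual_def by (metis leqB_not map_not_not map_not_points)

lemma img_not: "x \<in> map Not ` A \<longleftrightarrow> map Not x \<in> A"
  by (metis image_iff map_not_not)

lemma map_nn[simp]: "map (Not \<circ> Not) x = x"
  by (simp add: comp_def)

lemma leqB_not1: "leqB x (map Not y) \<longleftrightarrow> leqB y (map Not x)"
  using leqB_not[of "map Not x" y] by simp

lemma leqB_not2: "leqB (map Not y) x \<longleftrightarrow> leqB (map Not x) y"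
  using leqB_not[of y "map Not x"] by simp

lemma dual_maxz: "max_zeros n (dual f) = map Not ` min_ones n f"
proof (rule set_eqI, unfold img_not)
  fix x
  show "x \<in> max_zeros n (dual f) \<longleftrightarrow> map Not x \<in> min_ones n f"
  proof
    assume x: "x \<in> max_zeros n (dual f)"
    show "map Not x \<in> min_ones n f" unfolding min_ones_def
    proof (intro CollectI conjI ballI impI)
      show "map Not x \<in> points n" "f (map Not x)" using x by (auto simp: max_zeros_def dual_def)
      fix y assume y: "y \<in> points n" "f y \<and> leqB y (map Not x)"
      have "map Not y \<in> points n" "\<not> dual f (map Not y)" "leqB x (map Not y)"
        using y by (auto simp: dual_def leqB_not1)
      then have "map Not y = x" using x unfolding max_zeros_def by blast
      then show "y = map Not x" by (metis map_not_not)
    qed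
  next
    assume x: "map Not x \<in> min_ones n f"
    show "x \<in> max_zeros n (dual f)" unfolding max_zeros_def
    proof (intro CollectI conjI ballI impI)
      show "x \<in> points n" "\<not> dual f x" using x by (auto simp: min_ones_def dual_def)
      fix y assume y: "y \<in> points n" "\<not> dual f y \<and> leqB x y"
      have "map Not y \<in> points n" "f (map Not y)" "leqB (map Not y) (map Not x)"
        using y by (auto simp: dual_def leqB_not)
      then have "map Not y = map Not x" using x unfolding min_ones_def by blast
      then show "y = x" by (metis map_not_not)
    qed
  qed
qed

lemma dual_minone: "min_ones n (dual f) = map Not ` max_zeros n f"
proof (rule set_eqI, unfold img_not)
  fix x
  show "x \<in> min_ones n (dual f) \<longleftrightarrow> map Not x \<in> max_zeros n f"
  proof
    assume x: "x \<in> min_ones n (dual f)"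
    show "map Not x \<in> max_zeros n f" unfolding max_zeros_def
    proof (intro CollectI conjI ballI impI)
      show "map Not x \<in> points n" "\<not> f (map Not x)" using x by (auto simp: min_ones_def dual_def)
      fix y assume y: "y \<in> points n" "\<not> f y \<and> leqB (map Not x) y"
      have "map Not y \<in> points n" "dual f (map Not y)" "leqB (map Not y) x"
        using y by (auto simp: dual_def leqB_not2)
      then have "map Not y = x" using x unfolding min_ones_def by blast
      then show "y = map Not x" by (metis map_not_not)
    qed
  next
    assume x: "map Not x \<in> max_zeros n f"
    show "x \<in> min_ones n (dual f)" unfolding min_ones_def
    proof (intro CollectI conjI ballI impI)
      show "x \<in> points n" "dual f x" using x by (auto simp: max_zeros_def dual_def)
      fix y assume y: "y \<in> points n" "dual f y \<and> leqB y x"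
      have "map Not y \<in> points n" "\<not> f (map Not y)" "leqB (map Not x) (map Not y)"
        using y by (auto simp: dual_def leqB_not)
      then have "map Not y = map Not x" using x unfolding max_zeros_def by blast
      then show "y = x" by (metis map_not_not)
    qed
  qed
qed

lemma inj_not: "inj_on (map Not) A"
  by (metis inj_onI map_not_not)

lemma dual_ext: "card (extremal_points n (dual f)) = card (extremal_points n f)"
  unfolding ext_card dual_maxz dual_minone by (simp add: card_image[OF inj_not])

lemma dual_rel: "rel' n (dual f) = rel' n f"
proof -
  have "(\<exists>x\<in>points n. dual f (x[i:=False]) \<noteq> dual f (x[i:=True])) \<longleftrightarrow>
        (\<exists>x\<in>points n. f (x[i:=False]) \<noteq> f (x[i:=True]))" for i
  proof
    assume "\<exists>x\<in>points n. dual f (x[i:=False]) \<noteq> dual f (x[i:=True])"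
    then obtain x where x: "x \<in> points n" "dual f (x[i:=False]) \<noteq> dual f (x[i:=True])" by blast
    then have "f ((map Not x)[i:=False]) \<noteq> f ((map Not x)[i:=True])"
      unfolding dual_def by (auto simp: map_update)
    then show "\<exists>x\<in>points n. f (x[i:=False]) \<noteq> f (x[i:=True])" using x(1) map_not_points by blast
  next
    assume "\<exists>x\<in>points n. f (x[i:=False]) \<noteq> f (x[i:=True])"
    then obtain x where x: "x \<in> points n" "f (x[i:=False]) \<noteq> f (x[i:=True])" by blast
    then have "dual f ((map Not x)[i:=False]) \<noteq> dual f ((map Not x)[i:=True])"
      unfolding dual_def by (auto simp: map_update)
    then show "\<exists>x\<in>points n. dual f (x[i:=False]) \<noteq> dual f (x[i:=True])" using x(1) map_not_points by blast
  qed
  then show ?thesis unfolding rel'_def by blast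
qed

lemma dual_fr: "fr (dual f) j a = dual (fr f j (\<not> a))"
  unfolding fr_def dual_def by (simp add: map_update)

lemma dual_canal: "canal n (dual f) \<Longrightarrow> canal n f"
proof -
  assume "canal n (dual f)"
  then obtain j where j: "j < n" and c: "(\<forall>x\<in>points n. dual f (x[j:=True])) \<or> (\<forall>x\<in>points n. \<not> dual f (x[j:=False]))"
    unfolding canal_def by blast
  from c show ?thesis
  proof
    assume a: "\<forall>x\<in>points n. dual f (x[j:=True])"
    have "\<not> f (x[j:=False])" if "x \<in> points n" for x
      using a[rule_format, of "map Not x"] that unfolding dual_def by (simp add: map_update)
    then show ?thesis unfolding canal_def using j by blast
  next
    assume a: "\<forall>x\<in>points n. \<not> dual f (x[j:=False])"
    have "f (x[j:=True])" if "x \<in> points n" for x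
      using a[rule_format, of "map Not x"] that unfolding dual_def by (simp add: map_update)
    then show ?thesis unfolding canal_def using j by blast
  qed
qed


definition dom :: "nat \<Rightarrow> (bool list \<Rightarrow> bool) \<Rightarrow> nat \<Rightarrow> nat \<Rightarrow> bool" where
  "dom n f a b \<longleftrightarrow> (\<forall>x\<in>points n. f (x[b:=True, a:=False]) \<longrightarrow> f (x[b:=False, a:=True]))"

definition NN :: "nat \<Rightarrow> (bool list \<Rightarrow> bool) \<Rightarrow> nat \<Rightarrow> nat" where
  "NN n f a = card {x\<in>points n. f x \<and> x!a}"

lemma dom_lost1:
  assumes pos: "positive n f" and U: "\<forall>x\<in>points n. f (x[l:=False, j:=True]) = f (x[l:=True, j:=True])"
  shows "dom n f j l"
  unfolding dom_def
proof (intro ballI impI)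
  fix x assume x: "x \<in> points n" and fx: "f (x[l:=True, j:=False])"
  have "f (x[l:=True, j:=True])" using pos_upd[OF pos, of "x[l:=True]" j] fx x by simp
  then show "f (x[l:=False, j:=True])" using U x by simp
qed

lemma dom_lost0:
  assumes pos: "positive n f" and L: "\<forall>x\<in>points n. f (x[l:=False, j:=False]) = f (x[l:=True, j:=False])"
  shows "dom n f j l"
  unfolding dom_def
proof (intro ballI impI)
  fix x assume x: "x \<in> points n" and fx: "f (x[l:=True, j:=False])"
  have "f (x[l:=False, j:=False])" using L x fx by simp
  then show "f (x[l:=False, j:=True])" using pos_upd[OF pos, of "x[l:=False]" j] x by simp
qed

lemma upd_idg: "x!a = p \<Longrightarrow> x!b = q \<Longrightarrow> x[a:=p, b:=q] = x"
  by (metis list_update_id)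

lemma upd_id2: "x!a = False \<Longrightarrow> x!b = True \<Longrightarrow> x[a:=False, b:=True] = x"
  by (rule upd_idg)

lemma count_dom:
  assumes d: "dom n f a b" and ab: "a \<noteq> b" "a < n" "b < n"
  shows "NN n f b \<le> NN n f a \<and> (NN n f b = NN n f a \<longrightarrow> dom n f b a)"
proof -
  let ?Sb = "{x\<in>points n. f x \<and> x!b \<and> \<not> x!a}"
  let ?Sa = "{x\<in>points n. f x \<and> x!a \<and> \<not> x!b}"
  let ?C = "{x\<in>points n. f x \<and> x!a \<and> x!b}"
  define \<sigma> where "\<sigma> = (\<lambda>x::bool list. x[a:=True, b:=False])"
  define \<tau> where "\<tau> = (\<lambda>x::bool list. x[a:=False, b:=True])"
  have fin: "finite ?Sb" "finite ?Sa" "finite ?C" using finite_points by auto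
  have eb: "{x\<in>points n. f x \<and> x!b} = ?C \<union> ?Sb" by auto
  have ea: "{x\<in>points n. f x \<and> x!a} = ?C \<union> ?Sa" by auto
  have Nb: "NN n f b = card ?C + card ?Sb" unfolding NN_def eb by (rule card_Un_disjoint) (use fin in auto)
  have Na: "NN n f a = card ?C + card ?Sa" unfolding NN_def ea by (rule card_Un_disjoint) (use fin in auto)
  have tau_sigma: "\<tau> (\<sigma> x) = x" if "x \<in> ?Sb" for x
  proof -
    have "\<tau> (\<sigma> x) = x[a:=False, b:=True]" unfolding \<sigma>_def \<tau>_def using ab
      by (simp add: list_update_swap list_update_overwrite)
    also have "\<dots> = x" using that upd_id2 by auto
    finally show ?thesis .
  qed
  have inj: "inj_on \<sigma> ?Sb"
  proof (rule inj_onI)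
    fix x y assume "x \<in> ?Sb" "y \<in> ?Sb" "\<sigma> x = \<sigma> y"
    then show "x = y" using tau_sigma by metis
  qed
  have sub: "\<sigma> ` ?Sb \<subseteq> ?Sa"
  proof
    fix y assume "y \<in> \<sigma> ` ?Sb"
    then obtain x where x: "x \<in> ?Sb" and y: "y = \<sigma> x" by blast
    have xl: "length x = n" using x by (simp add: points_def)
    have xs: "x \<in> points n" "f x" "x!a = False" "x!b = True" using x by auto
    have "x[b:=True, a:=False] = x" using upd_idg[OF xs(4) xs(3)] .
    then have "f (x[b:=False, a:=True])" using d[unfolded dom_def, rule_format, OF xs(1)] xs(2) by simp
    moreover have "x[b:=False, a:=True] = \<sigma> x" unfolding \<sigma>_def using ab by (simp add: list_update_swap)
    ultimately show "y \<in> ?Sa" using y x ab xl unfolding \<sigma>_def by simp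
  qed
  have le: "card ?Sb \<le> card ?Sa"
    using card_image[OF inj] card_mono[OF fin(2) sub] by simp
  have "dom n f b a" if eq: "NN n f b = NN n f a"
  proof -
    have "card (\<sigma> ` ?Sb) = card ?Sa" using eq Na Nb card_image[OF inj] by simp
    then have im: "\<sigma> ` ?Sb = ?Sa" using card_subset_eq[OF fin(2) sub] by simp
    show ?thesis unfolding dom_def
    proof (intro ballI impI)
      fix x assume x: "x \<in> points n" and fx: "f (x[a:=True, b:=False])"
      have "x[a:=True, b:=False] \<in> ?Sa" using x fx ab by (simp add: points_def)
      then obtain w where w: "w \<in> ?Sb" and "x[a:=True, b:=False] = \<sigma> w" using im by blast
      then have "\<tau> (x[a:=True, b:=False]) = w" using tau_sigma by simp
      moreover have "\<tau> (x[a:=True, b:=False]) = x[a:=False, b:=True]" unfolding \<tau>_def using ab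
        by (simp add: list_update_swap list_update_overwrite)
      ultimately show "f (x[a:=False, b:=True])" using w by simp
    qed
  qed
  then show ?thesis using Na Nb le by simp
qed

lemma upd_keep: "j \<noteq> l \<Longrightarrow> x[j:=a, l:=x!l] = x[j:=a]"
  by (metis list_update_id nth_list_update_neq)

lemma not_rel_of: "\<forall>x\<in>points n. f (x[i:=False]) = f (x[i:=True]) \<Longrightarrow> i \<notin> rel' n f"
  unfolding rel'_def by auto

lemma irr_from:
  assumes d: "j \<noteq> l'"
  and G: "\<forall>x\<in>points n. f (x[l':=False, j:=True]) = f (x[l':=True, j:=True])"
  and L: "\<forall>x\<in>points n. f (x[l':=False, j:=False]) = f (x[l':=True, j:=False])"
  shows "l' \<notin> rel' n f"
proof (rule not_rel_of, rule ballI)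
  fix x assume x: "x \<in> points n"
  have k: "x[l':=a, j:=x!j] = x[l':=a]" for a using upd_keep[of l' j x a] d by simp
  show "f (x[l':=False]) = f (x[l':=True])"
  proof (cases "x!j")
    case True
    have k': "x[l':=a, j:=True] = x[l':=a]" for a using k[of a] True by simp
    have "f (x[l':=False, j:=True]) = f (x[l':=True, j:=True])" using G x by blast
    then show ?thesis unfolding k' .
  next
    case False
    have k': "x[l':=a, j:=False] = x[l':=a]" for a using k[of a] False by simp
    have "f (x[l':=False, j:=False]) = f (x[l':=True, j:=False])" using L x by blast
    then show ?thesis unfolding k' .
  qed
qed

lemma three:
  assumes d: "j \<noteq> l" "j \<noteq> l'" "l \<noteq> l'"
  and U: "\<forall>y\<in>points n. f (y[l:=False, j:=True]) = f (y[l:=True, j:=True])"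
  and L: "\<forall>y\<in>points n. f (y[l':=False, j:=False]) = f (y[l':=True, j:=False])"
  and E: "\<forall>y\<in>points n. f (y[l:=True, j:=False]) = f (y[l:=False, j:=True])"
  and x: "x \<in> points n"
  shows "f (x[l':=False, j:=True]) = f (x[l':=True, j:=True])"
proof -
  have d': "l \<noteq> j" "l' \<noteq> j" "l' \<noteq> l" using d by auto
  define g where "g a b c = f (x[j:=a, l:=b, l':=c])" for a b c
  have s1: "x[l':=c, l:=b, j:=a] = x[j:=a, l:=b, l':=c]" for a b c
    using d d' by (metis list_update_swap)
  have s2: "x[l:=b, l':=c, j:=a] = x[j:=a, l:=b, l':=c]" for a b c
    using d d' by (metis list_update_swap)
  have U': "g True False c = g True True c" for c
    using U[rule_format, of "x[l':=c]"] x unfolding g_def s1 by simp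
  have E': "g False True c = g True False c" for c
    using E[rule_format, of "x[l':=c]"] x unfolding g_def s1 by simp
  have L': "g False b False = g False b True" for b
    using L[rule_format, of "x[l:=b]"] x unfolding g_def s2 by simp
  have g0: "g True False False = g True False True"
  proof -
    have "g True False False = g False True False" using E'[of False] by simp
    also have "\<dots> = g False True True" using L'[of True] by simp
    also have "\<dots> = g True False True" using E'[of True] by simp
    finally show ?thesis .
  qed
  have gb: "g True b False = g True b True" for b
  proof (cases b)
    case False
    then show ?thesis using g0 by simp
  next
    case True
    have "g True True False = g True False False" using U'[of False] by simp
    also have "\<dots> = g True False True" using g0 .
    also have "\<dots> = g True True True" using U'[of True] by simp
    finally show ?thesis using True by simp
  qed
  have k: "x[j:=True, l:=x!l] = x[j:=True]" using upd_keep[OF d(1)] .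
  have "x[j:=True, l:=x!l, l':=c] = x[l':=c, j:=True]" for c
    unfolding k using d' by (simp add: list_update_swap)
  then show ?thesis using gb[of "x!l"] unfolding g_def by simp
qed

lemma choice:
  assumes pos: "positive n f" and ne: "rel' n f \<noteq> {}"
  shows "\<exists>j\<in>rel' n f. rel' n (fr f j True) = rel' n f - {j} \<or> rel' n (fr f j False) = rel' n f - {j}"
proof -
  let ?V = "rel' n f"
  have fin: "finite ?V" by (rule rel_finite)
  obtain j where jV: "j \<in> ?V" and jmin: "\<forall>l\<in>?V. NN n f j \<le> NN n f l"
  proof -
    have "Min (NN n f ` ?V) \<in> NN n f ` ?V" using fin ne by (intro Min_in) auto
    then obtain j where "j \<in> ?V" "NN n f j = Min (NN n f ` ?V)" by auto
    moreover have "\<forall>l\<in>?V. Min (NN n f ` ?V) \<le> NN n f l" using fin by auto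
    ultimately show ?thesis using that by auto
  qed
  have jn: "j < n" using jV rel_sub by auto
  show ?thesis
  proof (rule ccontr)
    assume "\<not> ?thesis"
    then have n1: "rel' n (fr f j True) \<noteq> ?V - {j}" and n0: "rel' n (fr f j False) \<noteq> ?V - {j}" using jV by auto
    obtain l where l: "l \<in> ?V" "l \<noteq> j" "l \<notin> rel' n (fr f j True)" using n1 rel_fr_sub[of n f j True] by blast
    obtain l' where l': "l' \<in> ?V" "l' \<noteq> j" "l' \<notin> rel' n (fr f j False)" using n0 rel_fr_sub[of n f j False] by blast
    have ln: "l < n" "l' < n" using l l' rel_sub by auto
    have U: "\<forall>x\<in>points n. f (x[l:=False, j:=True]) = f (x[l:=True, j:=True])"
      using fr_lost[OF ln(1) l(2) l(3)] by blast
    have L: "\<forall>x\<in>points n. f (x[l':=False, j:=False]) = f (x[l':=True, j:=False])"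
      using fr_lost[OF ln(2) l'(2) l'(3)] by blast
    have d1: "dom n f j l" by (rule dom_lost1[OF pos U])
    have c: "NN n f l \<le> NN n f j \<and> (NN n f l = NN n f j \<longrightarrow> dom n f l j)"
      using count_dom[OF d1 _ jn ln(1)] l(2) by auto
    have "NN n f j \<le> NN n f l" using jmin l(1) by auto
    then have d2: "dom n f l j" using c by auto
    have E: "\<forall>x\<in>points n. f (x[l:=True, j:=False]) = f (x[l:=False, j:=True])"
    proof
      fix x assume x: "x \<in> points n"
      have a: "f (x[l:=True, j:=False]) \<longrightarrow> f (x[l:=False, j:=True])" using d1 x unfolding dom_def by blast
      have b: "f (x[j:=True, l:=False]) \<longrightarrow> f (x[j:=False, l:=True])" using d2 x unfolding dom_def by blast
      have s: "x[j:=True, l:=False] = x[l:=False, j:=True]" "x[j:=False, l:=True] = x[l:=True, j:=False]"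
        using l(2) by (simp_all add: list_update_swap)
      show "f (x[l:=True, j:=False]) = f (x[l:=False, j:=True])" using a b unfolding s by blast
    qed
    show False
    proof (cases "l = l'")
      case True
      then have "l' \<notin> ?V" using irr_from[of j l' n f] U L l(2) by auto
      then show False using l' by blast
    next
      case False
      have G: "\<forall>x\<in>points n. f (x[l':=False, j:=True]) = f (x[l':=True, j:=True])"
        using three[of j l l' n f] U L E l(2) l'(2) False by auto
      have "l' \<notin> ?V" using irr_from[of j l' n f] G L l'(2) by auto
      then show False using l' by blast
    qed
  qed
qed


lemma leqB_clear: "leqB t (x[q:=True]) \<Longrightarrow> \<not> t!q \<Longrightarrow> leqB t (x[q:=False])"
  unfolding leqB_def by auto

lemma leqB_setj: "leqB x z \<Longrightarrow> z!j \<Longrightarrow> leqB (x[j:=True]) z"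
  unfolding leqB_def by auto

lemma leqB_clearj: "leqB y (s[j:=True]) \<Longrightarrow> leqB (y[j:=False]) s"
  unfolding leqB_def by auto

lemma minone_fr_j:
  assumes "t \<in> min_ones n (fr f j a)" "j < n"
  shows "t!j = False"
proof -
  have t: "t \<in> points n" "fr f j a t" "\<forall>y\<in>points n. fr f j a y \<and> leqB y t \<longrightarrow> y = t"
    using assms unfolding min_ones_def by auto
  have "fr f j a (t[j:=False])" using t(2) unfolding fr_def by simp
  then have "t[j:=False] = t" using t by simp
  then show ?thesis using assms(2) t(1) by (metis nth_list_update_eq points_upd in_points)
qed

lemma maxzero_fr_j:
  assumes "z \<in> max_zeros n (fr f j a)" "j < n"
  shows "z!j = True"
proof -
  have z: "z \<in> points n" "\<not> fr f j a z" "\<forall>y\<in>points n. \<not> fr f j a y \<and> leqB z y \<longrightarrow> y = z"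
    using assms unfolding max_zeros_def by auto
  have "\<not> fr f j a (z[j:=True])" using z(2) unfolding fr_def by simp
  then have "z[j:=True] = z" using z by simp
  then show ?thesis using assms(2) z(1) by (metis nth_list_update_eq points_upd in_points)
qed

lemma step_T:
  assumes pos: "positive n f" and jn: "j < n"
  shows "card (min_ones n f) \<ge> card (min_ones n (fr f j True)) +
           card {t\<in>min_ones n f. \<not> t!j \<and> t \<notin> min_ones n (fr f j True)}"
proof -
  let ?f1 = "fr f j True"
  let ?T1 = "min_ones n ?f1"
  let ?K = "{t\<in>min_ones n f. \<not> t!j \<and> t \<notin> ?T1}"
  define \<iota> where "\<iota> = (\<lambda>s. if f s then s else s[j:=True])"
  have img: "\<iota> s \<in> min_ones n f - ?K" if s: "s \<in> ?T1" for s
  proof -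
    have s': "s \<in> points n" "?f1 s" "\<forall>y\<in>points n. ?f1 y \<and> leqB y s \<longrightarrow> y = s"
      using s unfolding min_ones_def by auto
    have sj: "s!j = False" using minone_fr_j[OF s jn] .
    show ?thesis
    proof (cases "f s")
      case True
      have "s \<in> min_ones n f" unfolding min_ones_def
      proof (intro CollectI conjI ballI impI)
        fix y assume y: "y \<in> points n" "f y \<and> leqB y s"
        have "?f1 y" using pos_upd3[OF pos y(1)] y unfolding fr_def by simp
        then show "y = s" using s' y by blast
      qed (use s' True in auto)
      then show ?thesis using s True unfolding \<iota>_def by simp
    next
      case False
      have "s[j:=True] \<in> min_ones n f" unfolding min_ones_def
      proof (intro CollectI conjI ballI impI)
        show "s[j:=True] \<in> points n" using s' by simp
        show "f (s[j:=True])" using s' unfolding fr_def by simp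
        fix y assume y: "y \<in> points n" "f y \<and> leqB y (s[j:=True])"
        show "y = s[j:=True]"
        proof (cases "y!j")
          case True
          have "leqB (y[j:=False]) s" using leqB_clearj y by blast
          moreover have "?f1 (y[j:=False])"
          proof -
            have yy: "y[j:=True] = y" using True by (metis list_update_id)
            show ?thesis using y yy unfolding fr_def by simp
          qed
          ultimately have "y[j:=False] = s" using s' y(1) by simp
          then have "y[j:=False, j:=True] = s[j:=True]" by simp
          moreover have "y[j:=True] = y" using True by (metis list_update_id)
          ultimately show ?thesis by simp
        next
          case False
          have "leqB y s"
          proof -
            have "leqB (y[j:=False]) s" using leqB_clearj y by blast
            moreover have "y[j:=False] = y" using False by (metis list_update_id)
            ultimately show ?thesis by simp
          qed
          then have "f s" using pos_mono[OF pos y(1)] y by blast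
          then show ?thesis using \<open>\<not> f s\<close> by simp
        qed
      qed
      moreover have "(s[j:=True])!j" using jn s' by (simp add: in_points)
      ultimately show ?thesis using False unfolding \<iota>_def by simp
    qed
  qed
  have inj: "inj_on \<iota> ?T1"
  proof (rule inj_onI)
    fix a b assume a: "a \<in> ?T1" and b: "b \<in> ?T1" and e: "\<iota> a = \<iota> b"
    have aj: "a!j = False" "b!j = False" using minone_fr_j[OF a jn] minone_fr_j[OF b jn] by auto
    have la: "length a = n" "length b = n" using a b unfolding min_ones_def by (auto simp: in_points)
    show "a = b"
    proof (cases "f a"; cases "f b")
      assume "f a" "f b" then show ?thesis using e unfolding \<iota>_def by simp
    next
      assume "f a" "\<not> f b"
      then have "a = b[j:=True]" using e unfolding \<iota>_def by simp
      then have "a!j" using la jn by simp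
      then show ?thesis using aj by simp
    next
      assume "\<not> f a" "f b"
      then have "b = a[j:=True]" using e unfolding \<iota>_def by simp
      then have "b!j" using la jn by simp
      then show ?thesis using aj by simp
    next
      assume "\<not> f a" "\<not> f b"
      then have "a[j:=True] = b[j:=True]" using e unfolding \<iota>_def by simp
      then have "a[j:=True, j:=False] = b[j:=True, j:=False]" by simp
      then show ?thesis using aj by (simp add: list_update_id) (metis list_update_id)
    qed
  qed
  have fin: "finite (min_ones n f)" using finite_points unfolding min_ones_def by simp
  have sub: "\<iota> ` ?T1 \<union> ?K \<subseteq> min_ones n f" using img by auto
  have disj: "\<iota> ` ?T1 \<inter> ?K = {}" using img by auto
  have "card (\<iota> ` ?T1 \<union> ?K) = card ?T1 + card ?K"
    using card_Un_disjoint[OF _ _ disj] card_image[OF inj] fin sub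
    by (metis (no_types, lifting) finite_Un rev_finite_subset)
  then show ?thesis using card_mono[OF fin sub] by simp
qed

lemma step_F:
  assumes pos: "positive n f" and jn: "j < n"
  shows "card (max_zeros n f) \<ge> card (max_zeros n (fr f j True)) + card {z\<in>max_zeros n f. \<not> z!j}"
proof -
  let ?f1 = "fr f j True"
  let ?Z0 = "{z\<in>max_zeros n f. \<not> z!j}"
  have sub1: "max_zeros n ?f1 \<subseteq> {z\<in>max_zeros n f. z!j}"
  proof
    fix z assume z: "z \<in> max_zeros n ?f1"
    have z': "z \<in> points n" "\<not> ?f1 z" "\<forall>y\<in>points n. \<not> ?f1 y \<and> leqB z y \<longrightarrow> y = z"
      using z unfolding max_zeros_def by auto
    have zj: "z!j = True" using maxzero_fr_j[OF z jn] .
    have zz: "z[j:=True] = z" using zj by (metis list_update_id)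
    have "z \<in> max_zeros n f" unfolding max_zeros_def
    proof (intro CollectI conjI ballI impI)
      show "z \<in> points n" using z' by simp
      show "\<not> f z" using z'(2) zz unfolding fr_def by simp
      fix y assume y: "y \<in> points n" "\<not> f y \<and> leqB z y"
      have "y!j" using leqB_nth[of z y j] y zj jn z'(1) by (simp add: in_points)
      then have "y[j:=True] = y" by (metis list_update_id)
      then have "\<not> ?f1 y" using y unfolding fr_def by simp
      then show "y = z" using z' y by blast
    qed
    then show "z \<in> {z\<in>max_zeros n f. z!j}" using zj by simp
  qed
  have fin: "finite (max_zeros n f)" using finite_points unfolding max_zeros_def by simp
  have sub: "max_zeros n ?f1 \<union> ?Z0 \<subseteq> max_zeros n f" using sub1 by auto
  have disj: "max_zeros n ?f1 \<inter> ?Z0 = {}" using sub1 by auto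
  have "card (max_zeros n ?f1 \<union> ?Z0) = card (max_zeros n ?f1) + card ?Z0"
    using card_Un_disjoint[OF _ _ disj] fin sub by (meson finite_Un rev_finite_subset)
  then show ?thesis using card_mono[OF fin sub] by simp
qed

lemma Z0_ne:
  assumes pos: "positive n f" and jV: "j \<in> rel' n f"
  shows "{z\<in>max_zeros n f. \<not> z!j} \<noteq> {}"
proof -
  obtain x where x: "x \<in> points n" "f (x[j:=False]) \<noteq> f (x[j:=True])" and jn: "j < n"
    using jV unfolding rel'_def by auto
  have a: "\<not> f (x[j:=False])" "f (x[j:=True])" using x pos_upd[OF pos x(1)] by auto
  obtain z where z: "z \<in> max_zeros n f" "leqB (x[j:=False]) z"
    using exists_max_zero[of "x[j:=False]" n f] a x by auto
  have "\<not> z!j"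
  proof
    assume "z!j"
    then have "leqB (x[j:=False, j:=True]) z" using leqB_setj z(2) by blast
    then have "f z" using pos_mono[OF pos _ _ a(2)] x by simp
    then show False using z unfolding max_zeros_def by auto
  qed
  then show ?thesis using z by auto
qed

lemma step1:
  assumes pos: "positive n f" and jV: "j \<in> rel' n f"
  and keep: "rel' n (fr f j True) = rel' n f - {j}"
  and ih1: "card (rel' n (fr f j True)) + 1 \<le> card (extremal_points n (fr f j True))"
  and ih2: "card (extremal_points n (fr f j True)) = card (rel' n (fr f j True)) + 1 \<Longrightarrow>
            rel' n (fr f j True) \<noteq> {} \<Longrightarrow> canal n (fr f j True)"
  shows "card (rel' n f) + 1 \<le> card (extremal_points n f) \<and>
         (card (extremal_points n f) = card (rel' n f) + 1 \<longrightarrow> canal n f)"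
proof -
  let ?f1 = "fr f j True" let ?V = "rel' n f"
  let ?K = "{t\<in>min_ones n f. \<not> t!j \<and> t \<notin> min_ones n ?f1}"
  let ?Z0 = "{z\<in>max_zeros n f. \<not> z!j}"
  have jn: "j < n" using jV rel_sub by auto
  have cV: "card (rel' n ?f1) + 1 = card ?V"
  proof -
    have "card (?V - {j}) = card ?V - 1" using jV rel_finite by simp
    moreover have "card ?V \<ge> 1" using jV rel_finite by (metis One_nat_def Suc_leI card_gt_0_iff empty_iff)
    ultimately show ?thesis using keep by simp
  qed
  have T: "card (min_ones n f) \<ge> card (min_ones n ?f1) + card ?K" using step_T[OF pos jn] .
  have F: "card (max_zeros n f) \<ge> card (max_zeros n ?f1) + card ?Z0" using step_F[OF pos jn] .
  have finZ: "finite ?Z0" using finite_points unfolding max_zeros_def by simp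
  have finK: "finite ?K" using finite_points unfolding min_ones_def by simp
  have Z: "card ?Z0 \<ge> 1" using Z0_ne[OF pos jV] finZ by (metis One_nat_def Suc_leI card_gt_0_iff)
  have e: "card (extremal_points n f) \<ge> card (extremal_points n ?f1) + card ?K + card ?Z0"
    using T F unfolding ext_card by simp
  have bound: "card ?V + 1 \<le> card (extremal_points n f)" using e ih1 cV Z by simp
  have tight: "canal n f" if eq: "card (extremal_points n f) = card ?V + 1"
  proof -
    have e1: "card (extremal_points n ?f1) = card (rel' n ?f1) + 1" using e ih1 cV Z eq by simp
    have "card ?K = 0" using e ih1 cV Z eq by simp
    then have K0: "?K = {}" using finK by simp
    have "card ?Z0 = 1" using e ih1 cV Z eq by simp
    then obtain z0 where Z0: "?Z0 = {z0}" using card_1_singletonE by blast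
    have z0: "z0 \<in> points n" "\<not> f z0" "\<forall>y\<in>points n. \<not> f y \<and> leqB z0 y \<longrightarrow> y = z0" "\<not> z0!j"
      using Z0 unfolding max_zeros_def by auto
    have z0l: "length z0 = n" using z0 by (simp add: in_points)
    show ?thesis
    proof (cases "\<forall>i<n. i \<noteq> j \<longrightarrow> z0!i")
      case True
      have "\<not> f (x[j:=False])" if x: "x \<in> points n" for x
      proof
        assume fx: "f (x[j:=False])"
        have "leqB (x[j:=False]) z0" using x True z0l unfolding leqB_def by (auto simp: in_points)
        then have "f z0" using pos_mono[OF pos _ _ fx] x by simp
        then show False using z0 by simp
      qed
      then show ?thesis unfolding canal_def using jn by blast
    next
      case False
      then obtain p where p: "p < n" "p \<noteq> j" "\<not> z0!p" by blast
      have pV: "p \<in> ?V"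
      proof -
        have "z0[p:=True] \<noteq> z0" using p z0l by (metis nth_list_update_eq)
        then have "f (z0[p:=True])" using z0(3)[rule_format, of "z0[p:=True]"] z0(1) by auto
        moreover have "z0[p:=False] = z0" using p by (metis list_update_id)
        ultimately show ?thesis unfolding rel'_def using p z0 by force
      qed
      then have "rel' n ?f1 \<noteq> {}" using keep p by auto
      then have "canal n ?f1" using ih2 e1 by simp
      then obtain q where qn: "q < n" and B: "(\<forall>x\<in>points n. ?f1 (x[q:=True])) \<or> (\<forall>x\<in>points n. \<not> ?f1 (x[q:=False]))"
        unfolding canal_def by blast
      from B show ?thesis
      proof
        assume B1: "\<forall>x\<in>points n. \<not> ?f1 (x[q:=False])"
        have "\<not> f (x[q:=False])" if x: "x \<in> points n" for x
        proof
          assume "f (x[q:=False])"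
          then have "f (x[q:=False, j:=True])" using pos_upd3[OF pos] x by simp
          then show False using B1 x unfolding fr_def by simp
        qed
        then show ?thesis unfolding canal_def using qn by blast
      next
        assume B2: "\<forall>x\<in>points n. ?f1 (x[q:=True])"
        show ?thesis
        proof (cases "\<forall>x\<in>points n. f (x[q:=True])")
          case True
          then show ?thesis unfolding canal_def using qn by blast
        next
          case False
          then obtain x0 where x0: "x0 \<in> points n" "\<not> f (x0[q:=True])" by blast
          have qj: "q \<noteq> j"
          proof
            assume "q = j"
            then have "\<forall>x\<in>points n. ?f1 x = True" using B2 unfolding fr_def by simp
            then have "rel' n ?f1 = {}" by (rule norel_of_const)
            then show False using \<open>rel' n ?f1 \<noteq> {}\<close> by simp
          qed
          define u where "u = (replicate n False)[q:=True]"
          have u: "u \<in> points n" unfolding u_def by (simp add: in_points)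
          have ul: "length u = n" unfolding u_def by simp
          have leu: "leqB u y" if "y \<in> points n" "y!q" for y
            using that qn unfolding u_def leqB_def by (auto simp: in_points)
          have nfu: "\<not> f u"
          proof
            assume "f u"
            moreover have "leqB u (x0[q:=True])" using leu x0 qn by (simp add: in_points)
            ultimately show False using pos_mono[OF pos u] x0 by blast
          qed
          have f1u: "?f1 u" using B2[rule_format, of "replicate n False"] unfolding u_def by (simp add: in_points)
          have indep: "f (x[q:=False])" if x: "x \<in> points n" "\<not> x!j" "f (x[q:=True])" for x
          proof (rule ccontr)
            assume nf: "\<not> f (x[q:=False])"
            obtain t where t: "t \<in> min_ones n f" "leqB t (x[q:=True])"
              using exists_min_one[of "x[q:=True]" n f] x by auto
            have t': "t \<in> points n" "f t" using t unfolding min_ones_def by auto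
            have tq: "t!q"
            proof (rule ccontr)
              assume "\<not> t!q"
              then have "leqB t (x[q:=False])" using leqB_clear t by blast
              then show False using pos_mono[OF pos t'(1) _ t'(2)] nf by blast
            qed
            have tj: "\<not> t!j"
            proof
              assume "t!j"
              then have "(x[q:=True])!j" using leqB_nth[OF t(2)] t' jn by (simp add: in_points)
              then show False using x qj jn by (simp add: in_points)
            qed
            have "t \<in> min_ones n ?f1" using K0 t tj by blast
            then have "u = t" using f1u u leu[OF t'(1) tq] unfolding min_ones_def by blast
            then show False using nfu t' by simp
          qed
          have below: "leqB x z0" if x: "x \<in> points n" "\<not> x!j" "\<not> f x" for x
          proof -
            have nx': "\<not> f (x[q:=True])"
            proof
              assume "f (x[q:=True])"
              then have "f (x[q:=False])" using indep x by blast
              then show False using pos_upd2[OF pos x(1)] x by blast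
            qed
            obtain z where z: "z \<in> max_zeros n f" "leqB (x[q:=True]) z"
              using exists_max_zero[of "x[q:=True]" n f] x nx' by auto
            have "\<not> z!j"
            proof
              assume "z!j"
              then have "leqB (x[q:=True, j:=True]) z" using leqB_setj z(2) by blast
              moreover have "f (x[q:=True, j:=True])" using B2 x unfolding fr_def by simp
              moreover have xp: "x[q:=True, j:=True] \<in> points n" using x by simp
              ultimately have "f z" using pos_mono[OF pos xp] by blast
              then show False using z unfolding max_zeros_def by auto
            qed
            then have "z = z0" using z Z0 by blast
            then show ?thesis using z leqB_trans leqB_upd_T by blast
          qed
          have "f (y[p:=True])" if y: "y \<in> points n" for y
          proof (rule ccontr)
            assume ny: "\<not> f (y[p:=True])"
            let ?w = "y[p:=True, j:=False]"
            have nw: "\<not> f ?w"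
            proof
              assume "f ?w"
              moreover have "y[p:=True] \<in> points n" using y by simp
              ultimately have "f (y[p:=True])" using pos_upd2[OF pos, of "y[p:=True]" j] by blast
              then show False using ny by simp
            qed
            have "leqB ?w z0" using below[of ?w] nw y jn by (simp add: in_points)
            moreover have "?w!p" using p y by (simp add: in_points)
            ultimately have "z0!p" using leqB_nth p y by (simp add: in_points leqB_def)
            then show False using p by simp
          qed
          then show ?thesis unfolding canal_def using p by blast
        qed
      qed
    qed
  qed
  show ?thesis using bound tight by simp
qed


lemma main:
  "positive n f \<Longrightarrow> card (rel' n f) + 1 \<le> card (extremal_points n f) \<and>
     (card (extremal_points n f) = card (rel' n f) + 1 \<longrightarrow> rel' n f \<noteq> {} \<longrightarrow> canal n f)"
proof (induction "card (rel' n f)" arbitrary: f rule: less_induct)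
  case less
  show ?case
  proof (cases "rel' n f = {}")
    case True then show ?thesis using ext_const by simp
  next
    case False
    obtain j where jV: "j \<in> rel' n f"
      and k: "rel' n (fr f j True) = rel' n f - {j} \<or> rel' n (fr f j False) = rel' n f - {j}"
      using choice[OF less.prems False] by blast
    have lt: "card (rel' n f - {j}) < card (rel' n f)" using jV rel_finite by (meson card_Diff1_less)
    from k show ?thesis
    proof
      assume k1: "rel' n (fr f j True) = rel' n f - {j}"
      have IH: "card (rel' n (fr f j True)) + 1 \<le> card (extremal_points n (fr f j True)) \<and>
        (card (extremal_points n (fr f j True)) = card (rel' n (fr f j True)) + 1 \<longrightarrow>
         rel' n (fr f j True) \<noteq> {} \<longrightarrow> canal n (fr f j True))"
        using less.hyps[of "fr f j True"] k1 lt fr_pos[OF less.prems] by simp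
      show ?thesis using step1[OF less.prems jV k1] IH by blast
    next
      assume k0: "rel' n (fr f j False) = rel' n f - {j}"
      let ?g = "dual f"
      have pg: "positive n ?g" using dual_pos[OF less.prems] .
      have rg: "rel' n ?g = rel' n f" by (rule dual_rel)
      have fg: "fr ?g j True = dual (fr f j False)" using dual_fr[of f j True] by simp
      have kg: "rel' n (fr ?g j True) = rel' n ?g - {j}" using k0 rg fg dual_rel by simp
      have jg: "j \<in> rel' n ?g" using jV rg by simp
      have IH: "card (rel' n (fr ?g j True)) + 1 \<le> card (extremal_points n (fr ?g j True)) \<and>
        (card (extremal_points n (fr ?g j True)) = card (rel' n (fr ?g j True)) + 1 \<longrightarrow>
         rel' n (fr ?g j True) \<noteq> {} \<longrightarrow> canal n (fr ?g j True))"
        using less.hyps[of "fr ?g j True"] kg rg lt fr_pos[OF pg] by simp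
      have r: "card (rel' n ?g) + 1 \<le> card (extremal_points n ?g) \<and>
         (card (extremal_points n ?g) = card (rel' n ?g) + 1 \<longrightarrow> canal n ?g)"
        using step1[OF pg jg kg] IH by blast
      then show ?thesis using rg dual_ext[of n f] dual_canal[of n f] by simp
    qed
  qed
qed

lemma orC:
  assumes pos: "positive n f" and jn: "j < n"
  and one: "\<forall>x\<in>points n. f (x[j:=True])"
  and nz: "\<exists>x\<in>points n. \<not> f (x[j:=False])"
  shows "card (extremal_points n f) = card (extremal_points n (fr f j False)) + 1 \<and>
         rel' n f = insert j (rel' n (fr f j False)) \<and> j \<notin> rel' n (fr f j False)"
proof -
  let ?g = "fr f j False"
  let ?o = "replicate n False"
  define u where "u = ?o[j:=True]"
  have op: "?o \<in> points n" by (simp add: in_points)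
  have up: "u \<in> points n" unfolding u_def by (simp add: in_points)
  have nfo: "\<not> f ?o"
  proof
    assume fo: "f ?o"
    obtain x where x: "x \<in> points n" "\<not> f (x[j:=False])" using nz by blast
    have "leqB ?o (x[j:=False])" using x by (auto simp: leqB_def in_points)
    then show False using pos_mono[OF pos op _ fo] x by blast
  qed
  have fu: "f u" using one op unfolding u_def by blast
  have uj: "u!j" unfolding u_def using jn by simp
  have Tf: "min_ones n f = insert u (min_ones n ?g)"
  proof (rule set_eqI)
    fix t
    show "t \<in> min_ones n f \<longleftrightarrow> t \<in> insert u (min_ones n ?g)"
    proof
      assume t: "t \<in> min_ones n f"
      have t': "t \<in> points n" "f t" "\<forall>y\<in>points n. f y \<and> leqB y t \<longrightarrow> y = t"
        using t unfolding min_ones_def by auto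
      show "t \<in> insert u (min_ones n ?g)"
      proof (cases "t!j")
        case True
        have "leqB u t" using True t' jn unfolding u_def leqB_def by (auto simp: in_points)
        then have "u = t" using t' fu up by blast
        then show ?thesis by simp
      next
        case False
        have tt: "t[j:=False] = t" using False by (metis list_update_id)
        have "t \<in> min_ones n ?g" unfolding min_ones_def
        proof (intro CollectI conjI ballI impI)
          show "t \<in> points n" using t' by simp
          show "?g t" using t' tt unfolding fr_def by simp
          fix y assume y: "y \<in> points n" "?g y \<and> leqB y t"
          have ny: "\<not> y!j" using y False leqB_nth[of y t j] jn by (auto simp: in_points)
          then have "y[j:=False] = y" by (metis list_update_id)
          then have "f y" using y unfolding fr_def by simp
          then show "y = t" using t' y by blast
        qed
        then show ?thesis by simp
      qed
    next
      assume t: "t \<in> insert u (min_ones n ?g)"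
      show "t \<in> min_ones n f"
      proof (cases "t = u")
        case True
        have "u \<in> min_ones n f" unfolding min_ones_def
        proof (intro CollectI conjI ballI impI)
          show "u \<in> points n" "f u" using up fu by auto
          fix y assume y: "y \<in> points n" "f y \<and> leqB y u"
          have yi: "\<not> y!i" if "i < n" "i \<noteq> j" for i
            using y that leqB_nth[of y u i] unfolding u_def by (auto simp: in_points)
          show "y = u"
          proof (cases "y!j")
            case True
            show ?thesis using yi True y up jn unfolding u_def
              by (intro nth_equalityI) (auto simp: in_points)
          next
            case False
            have "leqB y ?o" using yi False y by (auto simp: leqB_def in_points)
            then show ?thesis using pos_mono[OF pos y(1)] y nfo by blast
          qed
        qed
        then show ?thesis using True by simp
      next
        case False
        then have t: "t \<in> min_ones n ?g" using t by simp
        have t': "t \<in> points n" "?g t" "\<forall>y\<in>points n. ?g y \<and> leqB y t \<longrightarrow> y = t"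
          using t unfolding min_ones_def by auto
        have tj: "t!j = False" using minone_fr_j[OF t jn] .
        have tt: "t[j:=False] = t" using tj by (metis list_update_id)
        show ?thesis unfolding min_ones_def
        proof (intro CollectI conjI ballI impI)
          show "t \<in> points n" using t' by simp
          show "f t" using t' tt unfolding fr_def by simp
          fix y assume y: "y \<in> points n" "f y \<and> leqB y t"
          have ny: "\<not> y!j" using y tj leqB_nth[of y t j] jn by (auto simp: in_points)
          then have "y[j:=False] = y" by (metis list_update_id)
          then have "?g y" using y unfolding fr_def by simp
          then show "y = t" using t' y by blast
        qed
      qed
    qed
  qed
  have unot: "u \<notin> min_ones n ?g" using minone_fr_j[of u n f j False] jn uj by auto
  have Ff: "max_zeros n f = (\<lambda>z. z[j:=False]) ` max_zeros n ?g"
  proof (rule set_eqI)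
    fix z
    show "z \<in> max_zeros n f \<longleftrightarrow> z \<in> (\<lambda>z. z[j:=False]) ` max_zeros n ?g"
    proof
      assume z: "z \<in> max_zeros n f"
      have z': "z \<in> points n" "\<not> f z" "\<forall>y\<in>points n. \<not> f y \<and> leqB z y \<longrightarrow> y = z"
        using z unfolding max_zeros_def by auto
      have zj: "\<not> z!j"
      proof
        assume "z!j"
        then have "z[j:=True] = z" by (metis list_update_id)
        then show False using one z' by metis
      qed
      have zz: "z[j:=False] = z" using zj by (metis list_update_id)
      let ?w = "z[j:=True]"
      have "?w \<in> max_zeros n ?g" unfolding max_zeros_def
      proof (intro CollectI conjI ballI impI)
        show "?w \<in> points n" using z' by simp
        show "\<not> ?g ?w" using z' zz unfolding fr_def by simp
        fix y assume y: "y \<in> points n" "\<not> ?g y \<and> leqB ?w y"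
        have yj: "y!j" using y leqB_nth[of ?w y j] jn z' by (auto simp: in_points)
        have "leqB z (y[j:=False])" using y zj unfolding leqB_def by auto
        moreover have "\<not> f (y[j:=False])" using y unfolding fr_def by simp
        ultimately have "y[j:=False] = z" using z' y(1) by simp
        then have "y[j:=False, j:=True] = ?w" by simp
        moreover have "y[j:=True] = y" using yj by (metis list_update_id)
        ultimately show "y = ?w" by simp
      qed
      moreover have "z = ?w[j:=False]" using zz by simp
      ultimately show "z \<in> (\<lambda>z. z[j:=False]) ` max_zeros n ?g" by blast
    next
      assume "z \<in> (\<lambda>z. z[j:=False]) ` max_zeros n ?g"
      then obtain w where w: "w \<in> max_zeros n ?g" and zw: "z = w[j:=False]" by blast
      have w': "w \<in> points n" "\<not> ?g w" "\<forall>y\<in>points n. \<not> ?g y \<and> leqB w y \<longrightarrow> y = w"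
        using w unfolding max_zeros_def by auto
      have wj: "w!j = True" using maxzero_fr_j[OF w jn] .
      show "z \<in> max_zeros n f" unfolding max_zeros_def
      proof (intro CollectI conjI ballI impI)
        show "z \<in> points n" using w' zw by simp
        show "\<not> f z" using w' zw unfolding fr_def by simp
        fix y assume y: "y \<in> points n" "\<not> f y \<and> leqB z y"
        have yj: "\<not> y!j"
        proof
          assume "y!j"
          then have "y[j:=True] = y" by (metis list_update_id)
          then show False using one y by metis
        qed
        have "leqB w (y[j:=True])" using y zw unfolding leqB_def by (auto simp: nth_list_update)
        moreover have "\<not> ?g (y[j:=True])"
        proof -
          have "y[j:=False] = y" using yj by (metis list_update_id)
          then show ?thesis using y unfolding fr_def by simp
        qed
        ultimately have "y[j:=True] = w" using w' y(1) by simp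
        then have "y[j:=True, j:=False] = z" using zw by simp
        moreover have "y[j:=False] = y" using yj by (metis list_update_id)
        ultimately show "y = z" by simp
      qed
    qed
  qed
  have inj: "inj_on (\<lambda>z. z[j:=False]) (max_zeros n ?g)"
  proof (rule inj_onI)
    fix a b assume a: "a \<in> max_zeros n ?g" and b: "b \<in> max_zeros n ?g" and e: "a[j:=False] = b[j:=False]"
    have "a!j = True" "b!j = True" using maxzero_fr_j[OF a jn] maxzero_fr_j[OF b jn] by auto
    then have "a = a[j:=False, j:=True]" "b = b[j:=False, j:=True]" by (simp_all add: list_update_id) (metis list_update_id)+
    then show "a = b" using e by metis
  qed
  have finT: "finite (min_ones n ?g)" using finite_points unfolding min_ones_def by simp
  have c1: "card (extremal_points n f) = card (extremal_points n ?g) + 1"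
    unfolding ext_card Tf Ff using card_insert_disjoint[OF finT unot] card_image[OF inj] by simp
  have jf: "j \<in> rel' n f"
  proof -
    obtain x where x: "x \<in> points n" "\<not> f (x[j:=False])" using nz by blast
    then have "f (x[j:=True])" using one by blast
    then show ?thesis unfolding rel'_def using x jn by force
  qed
  have sub: "rel' n ?g \<subseteq> rel' n f - {j}" by (rule rel_fr_sub)
  have sup: "l \<in> rel' n ?g" if l: "l \<in> rel' n f" "l \<noteq> j" for l
  proof -
    obtain x where x: "x \<in> points n" "f (x[l:=False]) \<noteq> f (x[l:=True])" and ln: "l < n"
      using l unfolding rel'_def by auto
    have k: "x[l:=a, j:=x!j] = x[l:=a]" for a using upd_keep[of l j x a] l(2) by simp
    have xj: "\<not> x!j"
    proof
      assume xj: "x!j"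
      have "f (x[l:=a])" for a
      proof -
        have "x[l:=a, j:=True] = x[l:=a]" using k[of a] xj by simp
        moreover have "f (x[l:=a, j:=True])" using one x by simp
        ultimately show ?thesis by simp
      qed
      then show False using x by simp
    qed
    have "x[l:=a, j:=False] = x[l:=a]" for a using k[of a] xj by simp
    then have "?g (x[l:=False]) \<noteq> ?g (x[l:=True])" using x unfolding fr_def by simp
    then show ?thesis unfolding rel'_def using x ln by blast
  qed
  have "rel' n f = insert j (rel' n ?g)" using sub sup jf by blast
  then show ?thesis using c1 sub by blast
qed

lemma andC:
  assumes pos: "positive n f" and jn: "j < n"
  and zero: "\<forall>x\<in>points n. \<not> f (x[j:=False])"
  and no: "\<exists>x\<in>points n. f (x[j:=True])"
  shows "card (extremal_points n f) = card (extremal_points n (fr f j True)) + 1 \<and>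
         rel' n f = insert j (rel' n (fr f j True)) \<and> j \<notin> rel' n (fr f j True)"
proof -
  let ?h = "dual f"
  have one: "\<forall>x\<in>points n. ?h (x[j:=True])"
  proof
    fix x assume x: "x \<in> points n"
    have "\<not> f ((map Not x)[j:=False])" using zero x by simp
    then show "?h (x[j:=True])" unfolding dual_def by (simp add: map_update)
  qed
  have nz: "\<exists>x\<in>points n. \<not> ?h (x[j:=False])"
  proof -
    obtain x0 where x0: "x0 \<in> points n" "f (x0[j:=True])" using no by blast
    have "\<not> ?h ((map Not x0)[j:=False])" using x0 unfolding dual_def by (simp add: map_update)
    then show ?thesis using x0 map_not_points by blast
  qed
  have r: "card (extremal_points n ?h) = card (extremal_points n (fr ?h j False)) + 1 \<and>
         rel' n ?h = insert j (rel' n (fr ?h j False)) \<and> j \<notin> rel' n (fr ?h j False)"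
    using orC[OF dual_pos[OF pos] jn one nz] .
  have fh: "fr ?h j False = dual (fr f j True)" using dual_fr[of f j False] by simp
  show ?thesis using r unfolding fh dual_ext dual_rel .
qed

lemma eval_indep: "i \<notin> nvars t \<Longrightarrow> eval_nested t (x[i:=a]) = eval_nested t x"
  by (induction t) auto

lemma nvars_fin: "finite (nvars t)"
  by (induction t) auto

lemma nvars_lt: "wf_nested n t \<Longrightarrow> nvars t \<subseteq> {..<n}"
  by (induction t) auto

lemma eval_lit_upd: "i < length x \<Longrightarrow> eval_lit i b (x[i:=a]) = (if b then a else \<not> a)"
  by simp

lemma eval_nonconst:
  "wf_nested n t \<Longrightarrow> (\<exists>x\<in>points n. eval_nested t x) \<and> (\<exists>x\<in>points n. \<not> eval_nested t x)"
proof (induction t)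
  case (Lit i b)
  then have i: "i < n" by simp
  let ?o = "replicate n False"
  have "eval_nested (Lit i b) (?o[i:=b])" "\<not> eval_nested (Lit i b) (?o[i:=\<not>b])" using i by auto
  moreover have "?o[i:=a] \<in> points n" for a by (simp add: in_points)
  ultimately show ?case by blast
next
  case (NOr i b t)
  then have i: "i < n" "i \<notin> nvars t" "wf_nested n t" by auto
  let ?o = "replicate n False"
  have "eval_nested (NOr i b t) (?o[i:=b])" using i by auto
  moreover obtain y where y: "y \<in> points n" "\<not> eval_nested t y" using NOr.IH i by blast
  moreover have "\<not> eval_nested (NOr i b t) (y[i:=\<not>b])" using y i eval_indep[OF i(2)] by (auto simp: in_points)
  moreover have "?o[i:=a] \<in> points n" for a by (simp add: in_points)
  ultimately show ?case using points_upd by blast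
next
  case (NAnd i b t)
  then have i: "i < n" "i \<notin> nvars t" "wf_nested n t" by auto
  let ?o = "replicate n False"
  have "\<not> eval_nested (NAnd i b t) (?o[i:=\<not>b])" using i by auto
  moreover obtain y where y: "y \<in> points n" "eval_nested t y" using NAnd.IH i by blast
  moreover have "eval_nested (NAnd i b t) (y[i:=b])" using y i eval_indep[OF i(2)] by (auto simp: in_points)
  moreover have "?o[i:=a] \<in> points n" for a by (simp add: in_points)
  ultimately show ?case using points_upd by blast
qed

lemma rel_nested: "wf_nested n t \<Longrightarrow> rel' n (eval_nested t) = nvars t"
proof (induction t)
  case (Lit i b)
  then have i: "i < n" by simp
  let ?o = "replicate n False"
  have "eval_nested (Lit i b) (?o[i:=False]) \<noteq> eval_nested (Lit i b) (?o[i:=True])" using i by auto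
  moreover have "?o \<in> points n" by (simp add: in_points)
  ultimately have "i \<in> rel' n (eval_nested (Lit i b))" unfolding rel'_def using i by blast
  moreover have "rel' n (eval_nested (Lit i b)) \<subseteq> {i}"
  proof
    fix l assume "l \<in> rel' n (eval_nested (Lit i b))"
    then obtain x where x: "x \<in> points n" "eval_nested (Lit i b) (x[l:=False]) \<noteq> eval_nested (Lit i b) (x[l:=True])"
      unfolding rel'_def by auto
    show "l \<in> {i}"
    proof (rule ccontr)
      assume "l \<notin> {i}"
      then have e1: "x[l:=False]!i = x!i" and e2: "x[l:=True]!i = x!i" by auto
      have "eval_nested (Lit i b) (x[l:=False]) = eval_nested (Lit i b) (x[l:=True])"
        by (simp only: eval_nested.simps eval_lit.simps e1 e2)
      then show False using x by simp
    qed
  qed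
  ultimately show ?case unfolding nvars.simps by blast
next
  case (NOr i b t)
  then have i: "i < n" "i \<notin> nvars t" "wf_nested n t" by auto
  have IH: "rel' n (eval_nested t) = nvars t" using NOr.IH i by simp
  have sub: "rel' n (eval_nested (NOr i b t)) \<subseteq> insert i (nvars t)"
  proof
    fix l assume l: "l \<in> rel' n (eval_nested (NOr i b t))"
    show "l \<in> insert i (nvars t)"
    proof (rule ccontr)
      assume "l \<notin> insert i (nvars t)"
      then have "l \<notin> nvars (NOr i b t)" by simp
      then have "eval_nested (NOr i b t) (x[l:=a]) = eval_nested (NOr i b t) x" for x a
        using eval_indep by blast
      then show False using l unfolding rel'_def by auto
    qed
  qed
  have ii: "i \<in> rel' n (eval_nested (NOr i b t))"
  proof -
    obtain y where y: "y \<in> points n" "\<not> eval_nested t y" using eval_nonconst[OF i(3)] by blast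
    have "eval_nested (NOr i b t) (y[i:=False]) \<noteq> eval_nested (NOr i b t) (y[i:=True])"
      using y i eval_indep[OF i(2)] by (auto simp: in_points)
    then show ?thesis unfolding rel'_def using y i by blast
  qed
  have ll: "l \<in> rel' n (eval_nested (NOr i b t))" if l: "l \<in> nvars t" for l
  proof -
    have li: "l \<noteq> i" using l i by auto
    obtain x where x: "x \<in> points n" "eval_nested t (x[l:=False]) \<noteq> eval_nested t (x[l:=True])" and ln: "l < n"
      using l IH unfolding rel'_def by auto
    let ?y = "x[i:=\<not>b]"
    have e: "eval_nested (NOr i b t) (?y[l:=a]) = eval_nested t (x[l:=a])" for a
    proof -
      have "?y[l:=a] = x[l:=a, i:=\<not>b]" using li by (simp add: list_update_swap)
      moreover have "eval_nested t (x[l:=a, i:=\<not>b]) = eval_nested t (x[l:=a])" using eval_indep[OF i(2)] .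
      moreover have "(?y[l:=a])!i = (\<not> b)" using li i x by (simp add: in_points)
      ultimately show ?thesis by (cases b) auto
    qed
    have yp: "?y \<in> points n" using x by simp
    have ne: "eval_nested (NOr i b t) (?y[l:=False]) \<noteq> eval_nested (NOr i b t) (?y[l:=True])"
      unfolding e using x(2) .
    show ?thesis unfolding rel'_def using ln yp ne by blast
  qed
  show ?case unfolding nvars.simps using sub ii ll by blast
next
  case (NAnd i b t)
  then have i: "i < n" "i \<notin> nvars t" "wf_nested n t" by auto
  have IH: "rel' n (eval_nested t) = nvars t" using NAnd.IH i by simp
  have sub: "rel' n (eval_nested (NAnd i b t)) \<subseteq> insert i (nvars t)"
  proof
    fix l assume l: "l \<in> rel' n (eval_nested (NAnd i b t))"
    show "l \<in> insert i (nvars t)"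
    proof (rule ccontr)
      assume "l \<notin> insert i (nvars t)"
      then have "l \<notin> nvars (NAnd i b t)" by simp
      then have "eval_nested (NAnd i b t) (x[l:=a]) = eval_nested (NAnd i b t) x" for x a
        using eval_indep by blast
      then show False using l unfolding rel'_def by auto
    qed
  qed
  have ii: "i \<in> rel' n (eval_nested (NAnd i b t))"
  proof -
    obtain y where y: "y \<in> points n" "eval_nested t y" using eval_nonconst[OF i(3)] by blast
    have "eval_nested (NAnd i b t) (y[i:=False]) \<noteq> eval_nested (NAnd i b t) (y[i:=True])"
      using y i eval_indep[OF i(2)] by (auto simp: in_points)
    then show ?thesis unfolding rel'_def using y i by blast
  qed
  have ll: "l \<in> rel' n (eval_nested (NAnd i b t))" if l: "l \<in> nvars t" for l
  proof -
    have li: "l \<noteq> i" using l i by auto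
    obtain x where x: "x \<in> points n" "eval_nested t (x[l:=False]) \<noteq> eval_nested t (x[l:=True])" and ln: "l < n"
      using l IH unfolding rel'_def by auto
    let ?y = "x[i:=b]"
    have e: "eval_nested (NAnd i b t) (?y[l:=a]) = eval_nested t (x[l:=a])" for a
    proof -
      have "?y[l:=a] = x[l:=a, i:=b]" using li by (simp add: list_update_swap)
      moreover have "eval_nested t (x[l:=a, i:=b]) = eval_nested t (x[l:=a])" using eval_indep[OF i(2)] .
      moreover have "(?y[l:=a])!i = b" using li i x by (simp add: in_points)
      ultimately show ?thesis by (cases b) auto
    qed
    have yp: "?y \<in> points n" using x by simp
    have ne: "eval_nested (NAnd i b t) (?y[l:=False]) \<noteq> eval_nested (NAnd i b t) (?y[l:=True])"
      unfolding e using x(2) .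
    show ?thesis unfolding rel'_def using ln yp ne by blast
  qed
  show ?case unfolding nvars.simps using sub ii ll by blast
qed


lemma ext_nested:
  "wf_nested n t \<Longrightarrow> positive n (eval_nested t) \<Longrightarrow>
   card (extremal_points n (eval_nested t)) = card (nvars t) + 1"
proof (induction t)
  case (Lit i b)
  have i: "i < n" using Lit by simp
  let ?f = "eval_nested (Lit i b)"
  let ?o = "replicate n False"
  have op: "?o \<in> points n" by (simp add: in_points)
  show ?case
  proof (cases b)
    case False
    let ?l = "replicate n True"
    have "?f ?o" "\<not> ?f ?l" using i False by auto
    moreover have "leqB ?o ?l" by (simp add: leqB_def)
    ultimately show ?thesis using pos_mono[OF Lit.prems(2) op] by blast
  next
    case True
    have one: "\<forall>x\<in>points n. ?f (x[i:=True])" using i True by (auto simp: in_points)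
    have "\<not> ?f (?o[i:=False])" using i True by simp
    then have nz: "\<exists>x\<in>points n. \<not> ?f (x[i:=False])" using op by blast
    have r: "card (extremal_points n ?f) = card (extremal_points n (fr ?f i False)) + 1"
      using orC[OF Lit.prems(2) i one nz] by blast
    have g0: "\<forall>x\<in>points n. fr ?f i False x = False" using i True by (auto simp: fr_def in_points)
    then have "rel' n (fr ?f i False) = {}" by (rule norel_of_const)
    then have "card (extremal_points n (fr ?f i False)) = 1" by (rule ext_const)
    then show ?thesis using r by (simp del: eval_nested.simps eval_lit.simps)
  qed
next
  case (NOr i b t)
  have i: "i < n" "i \<notin> nvars t" "wf_nested n t" using NOr.prems by auto
  let ?f = "eval_nested (NOr i b t)"
  obtain y where y: "y \<in> points n" "\<not> eval_nested t y" using eval_nonconst[OF i(3)] by blast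
  have ei: "eval_nested t (x[i:=a]) = eval_nested t x" for x a using eval_indep[OF i(2)] .
  show ?case
  proof (cases b)
    case False
    have "?f (y[i:=False])" using False i y by (simp add: in_points)
    moreover have "\<not> ?f (y[i:=True])" using False i y ei by (simp add: in_points)
    moreover have "leqB (y[i:=False]) (y[i:=True])" using leqB_trans leqB_upd_F leqB_upd_T by blast
    moreover have "y[i:=False] \<in> points n" using y by simp
    ultimately show ?thesis using pos_mono[OF NOr.prems(2)] by blast
  next
    case True
    have one: "\<forall>x\<in>points n. ?f (x[i:=True])" using i True by (auto simp: in_points)
    have "\<not> ?f (y[i:=False])" using y i True ei by (simp add: in_points)
    then have nz: "\<exists>x\<in>points n. \<not> ?f (x[i:=False])" using y by blast
    have r: "card (extremal_points n ?f) = card (extremal_points n (fr ?f i False)) + 1"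
      using orC[OF NOr.prems(2) i(1) one nz] by blast
    have g: "\<forall>x\<in>points n. fr ?f i False x = eval_nested t x" using True i ei by (auto simp: fr_def in_points)
    have pt: "positive n (eval_nested t)" using fr_pos[OF NOr.prems(2), of i False] cong_pos[OF g] by blast
    have IH: "card (extremal_points n (eval_nested t)) = card (nvars t) + 1" using NOr.IH i(3) pt by simp
    have "card (extremal_points n (fr ?f i False)) = card (nvars t) + 1" using cong_ext[OF g] IH by simp
    then show ?thesis using r i(2) nvars_fin by (simp del: eval_nested.simps eval_lit.simps)
  qed
next
  case (NAnd i b t)
  have i: "i < n" "i \<notin> nvars t" "wf_nested n t" using NAnd.prems by auto
  let ?f = "eval_nested (NAnd i b t)"
  obtain y where y: "y \<in> points n" "eval_nested t y" using eval_nonconst[OF i(3)] by blast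
  have ei: "eval_nested t (x[i:=a]) = eval_nested t x" for x a using eval_indep[OF i(2)] .
  show ?case
  proof (cases b)
    case False
    have "?f (y[i:=False])" using False i y ei by (simp add: in_points)
    moreover have "\<not> ?f (y[i:=True])" using False i y by (simp add: in_points)
    moreover have "leqB (y[i:=False]) (y[i:=True])" using leqB_trans leqB_upd_F leqB_upd_T by blast
    moreover have "y[i:=False] \<in> points n" using y by simp
    ultimately show ?thesis using pos_mono[OF NAnd.prems(2)] by blast
  next
    case True
    have zero: "\<forall>x\<in>points n. \<not> ?f (x[i:=False])" using i True by (auto simp: in_points)
    have "?f (y[i:=True])" using y i True ei by (simp add: in_points)
    then have no: "\<exists>x\<in>points n. ?f (x[i:=True])" using y by blast
    have r: "card (extremal_points n ?f) = card (extremal_points n (fr ?f i True)) + 1"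
      using andC[OF NAnd.prems(2) i(1) zero no] by blast
    have g: "\<forall>x\<in>points n. fr ?f i True x = eval_nested t x" using True i ei by (auto simp: fr_def in_points)
    have pt: "positive n (eval_nested t)" using fr_pos[OF NAnd.prems(2), of i True] cong_pos[OF g] by blast
    have IH: "card (extremal_points n (eval_nested t)) = card (nvars t) + 1" using NAnd.IH i(3) pt by simp
    have "card (extremal_points n (fr ?f i True)) = card (nvars t) + 1" using cong_ext[OF g] IH by simp
    then show ?thesis using r i(2) nvars_fin by (simp del: eval_nested.simps eval_lit.simps)
  qed
qed

lemma lro_tight:
  assumes pos: "positive n f" and l: "lro n f"
  shows "card (extremal_points n f) = card (rel' n f) + 1"
  using l unfolding lro_def
proof
  assume "\<exists>c. \<forall>x\<in>points n. f x = c"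
  then obtain c where "\<forall>x\<in>points n. f x = c" by blast
  then have r: "rel' n f = {}" by (rule norel_of_const)
  then show ?thesis using ext_const[OF r] by simp
next
  assume "\<exists>t. wf_nested n t \<and> (\<forall>x\<in>points n. f x = eval_nested t x)"
  then obtain t where t: "wf_nested n t" and e: "\<forall>x\<in>points n. f x = eval_nested t x" by blast
  have pt: "positive n (eval_nested t)" using pos cong_pos[OF e] by simp
  have "card (extremal_points n (eval_nested t)) = card (nvars t) + 1" using ext_nested[OF t pt] .
  moreover have "rel' n f = nvars t" using cong_rel[OF e] rel_nested[OF t] by simp
  ultimately show ?thesis using cong_ext[OF e] by simp
qed

lemma tight_lro:
  "positive n f \<Longrightarrow> card (extremal_points n f) = card (rel' n f) + 1 \<Longrightarrow> lro n f"
proof (induction "card (rel' n f)" arbitrary: f rule: less_induct)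
  case less
  have pos: "positive n f" and eq: "card (extremal_points n f) = card (rel' n f) + 1" using less.prems by auto
  show ?case
  proof (cases "rel' n f = {}")
    case True
    have "replicate n False \<in> points n" by (simp add: in_points)
    then have "\<forall>x\<in>points n. f x = f (replicate n False)" using const_of_norel[OF True] by blast
    then show ?thesis unfolding lro_def by blast
  next
    case False
    have "canal n f" using main[OF pos] eq False by blast
    then obtain j where jn: "j < n" and c: "(\<forall>x\<in>points n. f (x[j:=True])) \<or> (\<forall>x\<in>points n. \<not> f (x[j:=False]))"
      unfolding canal_def by blast
    have xx: "x[j:=x!j] = x" for x :: "bool list" by simp
    from c show ?thesis
    proof
      assume one: "\<forall>x\<in>points n. f (x[j:=True])"
      let ?g = "fr f j False"
      have nz: "\<exists>x\<in>points n. \<not> f (x[j:=False])"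
      proof (rule ccontr)
        assume "\<not> ?thesis"
        then have "\<forall>x\<in>points n. f x = True"
          using one by (metis (full_types) xx)
        then have "rel' n f = {}" by (rule norel_of_const)
        then show False using False by simp
      qed
      have r: "card (extremal_points n f) = card (extremal_points n ?g) + 1 \<and>
         rel' n f = insert j (rel' n ?g) \<and> j \<notin> rel' n ?g" using orC[OF pos jn one nz] .
      have cr: "card (rel' n f) = card (rel' n ?g) + 1" using r rel_finite by simp
      have lt: "card (rel' n ?g) < card (rel' n f)" using cr by simp
      have eg: "card (extremal_points n ?g) = card (rel' n ?g) + 1" using r cr eq by simp
      have lg: "lro n ?g" using less.hyps[OF lt fr_pos[OF pos] eg] .
      have fx: "f x = (x!j \<or> ?g x)" if x: "x \<in> points n" for x
      proof (cases "x!j")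
        case True
        then have "x[j:=True] = x" by (metis list_update_id)
        then show ?thesis using one x True by metis
      next
        case False
        then have "x[j:=False] = x" by (metis list_update_id)
        then show ?thesis using False unfolding fr_def by simp
      qed
      from lg show ?thesis unfolding lro_def
      proof
        assume "\<exists>c. \<forall>x\<in>points n. ?g x = c"
        then obtain c where gc: "\<forall>x\<in>points n. ?g x = c" by blast
        have "c = False" using nz gc unfolding fr_def
          by (metis points_upd list_update_overwrite)
        then have "\<forall>x\<in>points n. f x = eval_nested (Lit j True) x" using fx gc by simp
        moreover have "wf_nested n (Lit j True)" using jn by simp
        ultimately show "(\<exists>c. \<forall>x\<in>points n. f x = c) \<or> (\<exists>t. wf_nested n t \<and> (\<forall>x\<in>points n. f x = eval_nested t x))"
          by blast
      next
        assume "\<exists>t. wf_nested n t \<and> (\<forall>x\<in>points n. ?g x = eval_nested t x)"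
        then obtain t where t: "wf_nested n t" and e: "\<forall>x\<in>points n. ?g x = eval_nested t x" by blast
        have "nvars t = rel' n ?g" using rel_nested[OF t] cong_rel[OF e] by simp
        then have jt: "j \<notin> nvars t" using r by simp
        have "wf_nested n (NOr j True t)" using t jt jn by simp
        moreover have "\<forall>x\<in>points n. f x = eval_nested (NOr j True t) x" using fx e by simp
        ultimately show "(\<exists>c. \<forall>x\<in>points n. f x = c) \<or> (\<exists>t. wf_nested n t \<and> (\<forall>x\<in>points n. f x = eval_nested t x))"
          by blast
      qed
    next
      assume zero: "\<forall>x\<in>points n. \<not> f (x[j:=False])"
      let ?g = "fr f j True"
      have no: "\<exists>x\<in>points n. f (x[j:=True])"
      proof (rule ccontr)
        assume "\<not> ?thesis"
        then have "\<forall>x\<in>points n. f x = False"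
          using zero by (metis (full_types) xx)
        then have "rel' n f = {}" by (rule norel_of_const)
        then show False using False by simp
      qed
      have r: "card (extremal_points n f) = card (extremal_points n ?g) + 1 \<and>
         rel' n f = insert j (rel' n ?g) \<and> j \<notin> rel' n ?g" using andC[OF pos jn zero no] .
      have cr: "card (rel' n f) = card (rel' n ?g) + 1" using r rel_finite by simp
      have lt: "card (rel' n ?g) < card (rel' n f)" using cr by simp
      have eg: "card (extremal_points n ?g) = card (rel' n ?g) + 1" using r cr eq by simp
      have lg: "lro n ?g" using less.hyps[OF lt fr_pos[OF pos] eg] .
      have fx: "f x = (x!j \<and> ?g x)" if x: "x \<in> points n" for x
      proof (cases "x!j")
        case True
        then have "x[j:=True] = x" by (metis list_update_id)
        then show ?thesis using True unfolding fr_def by simp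
      next
        case False
        then have "x[j:=False] = x" by (metis list_update_id)
        then show ?thesis using zero x False by metis
      qed
      from lg show ?thesis unfolding lro_def
      proof
        assume "\<exists>c. \<forall>x\<in>points n. ?g x = c"
        then obtain c where gc: "\<forall>x\<in>points n. ?g x = c" by blast
        have "c = True" using no gc unfolding fr_def
          by (metis points_upd list_update_overwrite)
        then have "\<forall>x\<in>points n. f x = eval_nested (Lit j True) x" using fx gc by simp
        moreover have "wf_nested n (Lit j True)" using jn by simp
        ultimately show "(\<exists>c. \<forall>x\<in>points n. f x = c) \<or> (\<exists>t. wf_nested n t \<and> (\<forall>x\<in>points n. f x = eval_nested t x))"
          by blast
      next
        assume "\<exists>t. wf_nested n t \<and> (\<forall>x\<in>points n. ?g x = eval_nested t x)"
        then obtain t where t: "wf_nested n t" and e: "\<forall>x\<in>points n. ?g x = eval_nested t x" by blast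
        have "nvars t = rel' n ?g" using rel_nested[OF t] cong_rel[OF e] by simp
        then have jt: "j \<notin> nvars t" using r by simp
        have "wf_nested n (NAnd j True t)" using t jt jn by simp
        moreover have "\<forall>x\<in>points n. f x = eval_nested (NAnd j True t) x" using fx e by simp
        ultimately show "(\<exists>c. \<forall>x\<in>points n. f x = c) \<or> (\<exists>t. wf_nested n t \<and> (\<forall>x\<in>points n. f x = eval_nested t x))"
          by blast
      qed
    qed
  qed
qed

theorem mainTheorem3:
  fixes n k :: nat and f :: "bool list \<Rightarrow> bool"
  assumes "positive n f" and "canalyzing n f"
    and "k = card {i. relevant n f i}"
  shows "k + 1 \<le> card (extremal_points n f) \<and>
         (card (extremal_points n f) = k + 1 \<longleftrightarrow> lro n f)"
proof -
  have kr: "{i. relevant n f i} = rel' n f" using relevant_iff by blast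
  have k: "k = card (rel' n f)" using assms(3) kr by simp
  have b: "k + 1 \<le> card (extremal_points n f)" using main[OF assms(1)] k by simp
  have "card (extremal_points n f) = k + 1 \<longleftrightarrow> lro n f"
    using tight_lro[OF assms(1)] lro_tight[OF assms(1)] k by blast
  then show ?thesis using b by simp
qed

end
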